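(* Let $N\ge1$, $0<s<1$, let $G$ be an Orlicz function satisfying hypothesis (H) below with $p=\mathrm{index}(G)$, and let $u\in C_c^2(\mathbb{R}^N)$. Then for every $x\in\mathbb{R}^N$, \begin{equation*} \lim_{\delta\to0^+}\frac{p(1-s)}{G(\delta^{1-s})}\int_{B(x,\delta)}G\left(\frac{|u(x)-u(y)|}{|x-y|^{s}}\right)\frac{dy}{|x-y|^N}=K_{N,p}|\nabla u(x)|^{p}. \end{equation*}
   Context: An Orlicz function is a function $G:[0,\infty)\to[0,\infty)$ that is continuous, convex, increasing, with $G(0)=0$, satisfies $G(2t)\le \mathfrak{c}\,G(t)$ for all $t\ge0$ for some $\mathfrak{c}>2$, and $\lim_{t\to0^+}G(t)/t=0$. A positive measurable $F$ on $(0,\infty)$ is in $\mathcal{RV}_q(0)$ (regularly varying at $0$ with index $q$) if $\lim_{t\to0^+}F(\lambda t)/F(t)=\lambda^q$ for all $\lambda>0$. Hypothesis (H): $G\in\mathcal{RV}_p(0)$ is a piecewise smooth Orlicz function, $G'\in\mathcal{RV}_{p-1}(0)$, and writing $G(t)=t^p\ell(t)$, $\ell(t)\ge c_\ell>0$ for all $t>0$. $K_{N,p}=\int_{\mathbb{S}^{N-1}}|w\cdot e|^p\,d\sigma(w)$ for any unit vector $e$, $\sigma$ the surface measure. *)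

theory Defs
  imports "HOL-Analysis.Analysis"
begin

text \<open>Orlicz function (as a real function; only its values on [0,\<infinity>) matter).\<close>
definition orlicz :: "(real \<Rightarrow> real) \<Rightarrow> bool" where
  "orlicz G \<longleftrightarrow>
     continuous_on {0..} G \<and> convex_on {0..} G \<and> mono_on {0..} G \<and>
     (\<forall>t\<ge>0. G t \<ge> 0) \<and> G 0 = 0 \<and>
     (\<exists>c>2. \<forall>t\<ge>0. G (2 * t) \<le> c * G t) \<and>
     ((\<lambda>t. G t / t) \<longlongrightarrow> 0) (at_right 0)"

definition RV0 :: "real \<Rightarrow> (real \<Rightarrow> real) \<Rightarrow> bool" where
  "RV0 q F \<longleftrightarrow>
     (\<forall>t>0. F t > 0) \<and> F \<in> borel_measurable (restrict_space borel {0<..}) \<and>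
     (\<forall>a>0. ((\<lambda>t. F (a * t) / F t) \<longlongrightarrow> a powr q) (at_right 0))"

text \<open>Hypothesis (H): G is a piecewise smooth Orlicz function in RV_p(0) whose derivative
  G' (defined off a finite set of break points; any positive measurable choice there)
  is in RV_{p-1}(0), and G(t) = t^p l(t) with l bounded below by a positive constant.\<close>
definition hyp_H :: "(real \<Rightarrow> real) \<Rightarrow> real \<Rightarrow> bool" where
  "hyp_H G p \<longleftrightarrow>
     orlicz G \<and> RV0 p G \<and>
     (\<exists>G' S. finite S \<and>
        (\<forall>t\<in>{0<..} - S. (G has_real_derivative G' t) (at t)) \<and>
        continuous_on ({0<..} - S) G' \<and>
        RV0 (p - 1) G') \<and>
     (\<exists>c\<^sub>l>0. \<forall>t>0. G t / t powr p \<ge> c\<^sub>l)"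

text \<open>Surface measure on the unit sphere of a Euclidean space of dimension N, via the cone
  construction: \<sigma>(A) = N \<cdot> |{r w : 0 < r \<le> 1, w \<in> A}|.\<close>
definition sphere_measure :: "'a::euclidean_space measure" where
  "sphere_measure =
     scale_measure (ennreal (real DIM('a)))
       (distr (restrict_space lborel (ball 0 1 - {0})) (restrict_space borel (sphere 0 1))
          (\<lambda>x. x /\<^sub>R norm x))"

definition K_const :: "'a::euclidean_space itself \<Rightarrow> real \<Rightarrow> real" where
  "K_const _ p = (let e = (SOME e::'a. e \<in> Basis) in
      integral\<^sup>L sphere_measure (\<lambda>w::'a. \<bar>w \<bullet> e\<bar> powr p))"

definition C2c :: "('a::euclidean_space \<Rightarrow> real) \<Rightarrow> bool" where
  "C2c u \<longleftrightarrow>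
     (\<exists>(D :: 'a \<Rightarrow> ('a \<Rightarrow>\<^sub>L real)) (D2 :: 'a \<Rightarrow> ('a \<Rightarrow>\<^sub>L ('a \<Rightarrow>\<^sub>L real))).
        (\<forall>x. (u has_derivative blinfun_apply (D x)) (at x)) \<and>
        (\<forall>x. (D has_derivative blinfun_apply (D2 x)) (at x)) \<and>
        continuous_on UNIV D2) \<and>
     compact (closure {x. u x \<noteq> 0})"

definition grad :: "('a::euclidean_space \<Rightarrow> real) \<Rightarrow> 'a \<Rightarrow> 'a" where
  "grad u x = (\<Sum>b\<in>Basis. frechet_derivative u (at x) b *\<^sub>R b)"

end

theory Submission
  imports Defs "HOL-Probability.Probability"
begin


lemma hypH_facts:
  assumes "hyp_H G p"
  shows "continuous_on {0..} G" "convex_on {0..} G" "mono_on {0..} G"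
    "\<And>t. t \<ge> 0 \<Longrightarrow> G t \<ge> 0" "G 0 = 0"
    "\<exists>c>2. \<forall>t\<ge>0. G (2 * t) \<le> c * G t"
    "((\<lambda>t. G t / t) \<longlongrightarrow> 0) (at_right 0)"
    "\<And>t. t > 0 \<Longrightarrow> G t > 0"
    "\<And>a. a > 0 \<Longrightarrow> ((\<lambda>t. G (a * t) / G t) \<longlongrightarrow> a powr p) (at_right 0)"
    "\<exists>cl>0. \<forall>t>0. G t / t powr p \<ge> cl"
  using assms unfolding hyp_H_def orlicz_def RV0_def by auto

lemma hypH_p_gt1:
  assumes "hyp_H G p" shows "p > 1"
proof (rule ccontr)
  assume np: "\<not> p > 1"
  obtain cl where cl: "cl > 0" "\<And>t. t > 0 \<Longrightarrow> G t / t powr p \<ge> cl"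
    using hypH_facts(10)[OF assms] by auto
  have "\<forall>\<^sub>F t in at_right 0. G t / t < cl"
    using order_tendstoD(2)[OF hypH_facts(7)[OF assms] cl(1)] .
  moreover have "\<forall>\<^sub>F t in at_right (0::real). 0 < t \<and> t < 1"
    by (simp add: eventually_at_right_field) (auto intro!: exI[of _ 1])
  ultimately have "\<forall>\<^sub>F t in at_right (0::real). False"
  proof eventually_elim
    case (elim t)
    have G0: "G t > 0" using hypH_facts(8)[OF assms] elim by auto
    have "t \<le> t powr p" using powr_mono'[of p 1 t] np elim by auto
    moreover have "t powr p > 0" using elim by auto
    ultimately have "G t / t powr p \<le> G t / t"
      using G0 elim by (intro divide_left_mono) auto
    then show False using cl(2)[of t] elim by auto
  qed
  then show False by simp
qed

lemma hypH_scale_le: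
  assumes "hyp_H G p" "0 \<le> l" "l \<le> 1" "0 \<le> t"
  shows "G (l * t) \<le> l * G t"
proof -
  have "G ((1 - l) *\<^sub>R 0 + l *\<^sub>R t) \<le> (1 - l) * G 0 + l * G t"
    by (rule convex_onD[OF hypH_facts(2)[OF assms(1)]]) (use assms in auto)
  then show ?thesis using hypH_facts(5)[OF assms(1)] by simp
qed

lemma hypH_pow2:
  assumes "hyp_H G p" "\<forall>t\<ge>0. G (2 * t) \<le> c * G t" "c > 2" "0 \<le> t"
  shows "G (2^m * t) \<le> c^m * G t"
proof (induction m)
  case 0 then show ?case by simp
next
  case (Suc m)
  have "G (2^Suc m * t) = G (2 * (2^m * t))" by (simp add: mult.assoc)
  also have "\<dots> \<le> c * G (2^m * t)" using assms by auto
  also have "\<dots> \<le> c * (c^m * G t)" using Suc assms by (intro mult_left_mono) auto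
  finally show ?case by simp
qed

lemma hypH_ratio_bound:
  assumes "hyp_H G p"
  shows "\<exists>C\<ge>1. \<forall>t>0. \<forall>b. 0 \<le> b \<and> b \<le> L \<longrightarrow> G (t * b) / G t \<le> C * b"
proof -
  obtain c where c: "c > 2" "\<forall>t\<ge>0. G (2 * t) \<le> c * G t"
    using hypH_facts(6)[OF assms] by auto
  obtain m where m: "L < 2^m" using real_arch_pow[of 2 L] by auto
  have c1: "c^m \<ge> 1" using c by auto
  show ?thesis
  proof (intro exI[of _ "c^m"] conjI c1 allI impI)
    fix t b :: real assume t: "t > 0" and b: "0 \<le> b \<and> b \<le> L"
    have Gt: "G t > 0" using hypH_facts(8)[OF assms] t by auto
    show "G (t * b) / G t \<le> c^m * b"
    proof (cases "b \<le> 1")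
      case True
      have "G (b * t) \<le> b * G t" using hypH_scale_le[OF assms, of b t] True b t by auto
      then have "G (t * b) / G t \<le> b" using Gt by (simp add: field_simps mult.commute)
      also have "\<dots> \<le> c^m * b" using c1 b by (simp add: mult_right_mono[of 1 "c^m" b, simplified])
      finally show ?thesis .
    next
      case False
      have "G (t * b) \<le> G (2^m * t)"
        using hypH_facts(3)[OF assms] b m t False
        by (intro mono_onD[of "{0..}" G]) (auto simp: mult.commute)
      also have "\<dots> \<le> c^m * G t" using hypH_pow2[OF assms c(2) c(1)] t by auto
      finally have "G (t * b) / G t \<le> c^m" using Gt by (simp add: field_simps)
      also have "\<dots> \<le> c^m * b" using False c1 by (simp add: mult_left_mono[of 1 b "c^m", simplified])
      finally show ?thesis .
    qed
  qed
qed



lemma hypH_ratio_lim: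
  assumes H: "hyp_H G p" and tf: "filterlim tf (at_right 0) F"
    and bf: "(bf \<longlongrightarrow> b0) F" and bnn: "\<forall>\<^sub>F z in F. bf z \<ge> 0" and b0: "b0 \<ge> 0"
  shows "((\<lambda>z. G (tf z * bf z) / G (tf z)) \<longlongrightarrow> b0 powr p) F"
proof -
  have p1: "p > 1" using hypH_p_gt1[OF H] .
  have RV: "((\<lambda>z. G (a * tf z) / G (tf z)) \<longlongrightarrow> a powr p) F" if "a > 0" for a
    using filterlim_compose[OF hypH_facts(9)[OF H that] tf] .
  have tpos: "\<forall>\<^sub>F z in F. tf z > 0"
    using filterlim_at[THEN iffD1, OF tf] by (auto elim: eventually_mono)
  have mono: "G (a * tf z) \<le> G (tf z * bf z)" if "0 \<le> a" "a \<le> bf z" "tf z > 0" for a z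
    using hypH_facts(3)[OF H] that
    by (intro mono_onD[of "{0..}" G]) (auto simp: mult.commute intro: mult_left_mono)
  show ?thesis
  proof (cases "b0 = 0")
    case True
    have lim0: "(bf \<longlongrightarrow> 0) F" using bf True by simp
    have ev1: "\<forall>\<^sub>F z in F. bf z < 1" using order_tendstoD(2)[OF lim0] by simp
    have "((\<lambda>z. G (tf z * bf z) / G (tf z)) \<longlongrightarrow> 0) F"
    proof (rule tendsto_sandwich[OF _ _ tendsto_const lim0])
      show "\<forall>\<^sub>F z in F. 0 \<le> G (tf z * bf z) / G (tf z)"
        using tpos bnn
      proof eventually_elim
        case (elim z) then show ?case
          using hypH_facts(4,8)[OF H] by (auto intro!: divide_nonneg_pos)
      qed
      show "\<forall>\<^sub>F z in F. G (tf z * bf z) / G (tf z) \<le> bf z"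
        using tpos bnn ev1
      proof eventually_elim
        case (elim z)
        have "G (bf z * tf z) \<le> bf z * G (tf z)"
          using hypH_scale_le[OF H, of "bf z" "tf z"] elim by auto
        then show ?case using hypH_facts(8)[OF H, of "tf z"] elim
          by (simp add: field_simps mult.commute)
      qed
    qed
    then show ?thesis using True p1 by simp
  next
    case False
    then have b0p: "b0 > 0" using b0 by simp
    have cont: "((\<lambda>a. a powr p) \<longlongrightarrow> b0 powr p) (at b0 within S)" for S
      using b0p by (intro tendsto_powr tendsto_ident_at tendsto_const) auto
    show ?thesis
    proof (rule order_tendstoI)
      fix y assume y: "y < b0 powr p"
      have "\<forall>\<^sub>F a in at_left b0. y < a powr p" using order_tendstoD(1)[OF cont y] .
      then obtain b' where b': "b' < b0" "\<And>a. a > b' \<Longrightarrow> a < b0 \<Longrightarrow> y < a powr p"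
        unfolding eventually_at_left_field by auto
      define a where "a = (max b' (b0/2) + b0) / 2"
      have a: "a > 0" "a < b0" "y < a powr p"
        using b' b0p unfolding a_def by (auto intro!: b'(2))
      show "\<forall>\<^sub>F z in F. y < G (tf z * bf z) / G (tf z)"
        using order_tendstoD(1)[OF bf a(2)] order_tendstoD(1)[OF RV[OF a(1)] a(3)] tpos
      proof eventually_elim
        case (elim z)
        have "G (a * tf z) / G (tf z) \<le> G (tf z * bf z) / G (tf z)"
          using mono[of a z] elim a hypH_facts(8)[OF H, of "tf z"]
          by (intro divide_right_mono) auto
        then show ?case using elim by linarith
      qed
    next
      fix y assume y: "y > b0 powr p"
      have "\<forall>\<^sub>F a in at_right b0. a powr p < y" using order_tendstoD(2)[OF cont y] .
      then obtain b' where b': "b' > b0" "\<And>a. a > b0 \<Longrightarrow> a < b' \<Longrightarrow> a powr p < y"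
        unfolding eventually_at_right_field by auto
      define a where "a = (b' + b0) / 2"
      have a: "a > 0" "a > b0" "a powr p < y"
        using b' b0p unfolding a_def by (auto intro!: b'(2))
      show "\<forall>\<^sub>F z in F. G (tf z * bf z) / G (tf z) < y"
        using order_tendstoD(2)[OF bf a(2)] order_tendstoD(2)[OF RV[OF a(1)] a(3)] tpos bnn
      proof eventually_elim
        case (elim z)
        have "G (tf z * bf z) \<le> G (a * tf z)"
          using hypH_facts(3)[OF H] elim a
          by (intro mono_onD[of "{0..}" G]) (auto simp: mult.commute intro: mult_left_mono)
        then have "G (tf z * bf z) / G (tf z) \<le> G (a * tf z) / G (tf z)"
          using hypH_facts(8)[OF H, of "tf z"] elim
          by (intro divide_right_mono) auto
        then show ?case using elim by linarith
      qed
    qed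
  qed
qed



lemma C2c_deriv:
  assumes "C2c u"
  obtains D where "\<And>x. (u has_derivative blinfun_apply (D x)) (at x)" "continuous_on UNIV D"
proof -
  obtain D D2 where D: "\<forall>x. (u has_derivative blinfun_apply (D x)) (at x)"
    and D2: "\<forall>x. (D has_derivative blinfun_apply (D2 x)) (at x)"
    using assms unfolding C2c_def by blast
  have "continuous_on UNIV D"
    using D2 by (intro continuous_at_imp_continuous_on ballI has_derivative_continuous) auto
  then show ?thesis using that D by blast
qed

lemma linear_inner_repr:
  fixes f :: "'a::euclidean_space \<Rightarrow> real"
  assumes "linear f"
  shows "f h = (\<Sum>b\<in>Basis. f b *\<^sub>R b) \<bullet> h"
proof -
  have "f h = f (\<Sum>b\<in>Basis. (h \<bullet> b) *\<^sub>R b)" by (simp add: euclidean_representation)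
  also have "\<dots> = (\<Sum>b\<in>Basis. (h \<bullet> b) * f b)"
    using assms by (simp add: linear_sum linear_scale)
  also have "\<dots> = (\<Sum>b\<in>Basis. f b *\<^sub>R b) \<bullet> h"
    unfolding inner_sum_left by (intro sum.cong) (auto simp: inner_commute)
  finally show ?thesis .
qed

lemma grad_eq:
  assumes "(u has_derivative blinfun_apply Dx) (at x)"
  shows "blinfun_apply Dx h = grad u x \<bullet> h"
proof -
  have "frechet_derivative u (at x) = blinfun_apply Dx"
    using frechet_derivative_at[OF assms] by simp
  then show ?thesis unfolding grad_def
    using linear_inner_repr[of "blinfun_apply Dx" h] by (simp add: blinfun.bounded_linear_right bounded_linear.linear)
qed

lemma local_lipschitz:
  fixes u :: "'a::euclidean_space \<Rightarrow> real"
  assumes D: "\<And>x. (u has_derivative blinfun_apply (D x)) (at x)" and cD: "continuous_on UNIV D"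
  shows "\<exists>L\<ge>0. \<forall>y\<in>cball x 1. \<bar>u y - u x\<bar> \<le> L * norm (y - x)"
proof -
  have "compact (D ` cball x 1)"
    by (intro compact_continuous_image continuous_on_subset[OF cD]) auto
  then obtain B where B: "\<And>z. z \<in> cball x 1 \<Longrightarrow> norm (D z) \<le> B"
    using compact_imp_bounded[of "D ` cball x 1"] unfolding bounded_iff by (auto simp del: mem_cball)
  have B0: "B \<ge> 0" using B[of x] norm_ge_zero[of "D x"] by (simp del: norm_ge_zero)
  have "norm (u y - u x) \<le> B * norm (y - x)" if "y \<in> cball x 1" for y
  proof (rule differentiable_bound[of "cball x 1" u "\<lambda>z. blinfun_apply (D z)"])
    show "(u has_derivative blinfun_apply (D z)) (at z within cball x 1)" for z
      using D has_derivative_at_withinI by blast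
    show "onorm (blinfun_apply (D z)) \<le> B" if "z \<in> cball x 1" for z
      using B[OF that] by (simp add: norm_blinfun.rep_eq)
  qed (use that in auto)
  then show ?thesis using B0 by (intro exI[of _ B]) auto
qed

lemma diffquot_lim:
  fixes u :: "'a::euclidean_space \<Rightarrow> real"
  assumes D: "(u has_derivative blinfun_apply Dx) (at x)"
  shows "((\<lambda>d. (u (x + d *\<^sub>R k) - u x) / d) \<longlongrightarrow> blinfun_apply Dx k) (at_right 0)"
proof -
  have l: "((\<lambda>d::real. x + d *\<^sub>R k) has_derivative (\<lambda>d. d *\<^sub>R k)) (at 0)"
    by (auto intro!: derivative_eq_intros)
  have D0: "(u has_derivative blinfun_apply Dx) (at (x + 0 *\<^sub>R k))" using D by simp
  have "((\<lambda>d. u (x + d *\<^sub>R k)) has_derivative (\<lambda>d. blinfun_apply Dx (d *\<^sub>R k))) (at 0)"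
    using has_derivative_compose[OF l D0] by (simp add: o_def)
  then have "((\<lambda>d. u (x + d *\<^sub>R k)) has_derivative (\<lambda>d. d * blinfun_apply Dx k)) (at 0)"
    by (simp add: blinfun.scaleR_right)
  then have "((\<lambda>d. u (x + d *\<^sub>R k)) has_real_derivative blinfun_apply Dx k) (at 0)"
    by (simp add: has_field_derivative_def mult.commute[of _ "blinfun_apply Dx k"])
  then have "((\<lambda>d. (u (x + d *\<^sub>R k) - u (x + 0 *\<^sub>R k)) / (d - 0)) \<longlongrightarrow> blinfun_apply Dx k) (at 0)"
    unfolding has_field_derivative_iff by simp
  then have "((\<lambda>d. (u (x + d *\<^sub>R k) - u x) / d) \<longlongrightarrow> blinfun_apply Dx k) (at 0)" by simp
  then show ?thesis by (rule tendsto_mono[OF at_le, rotated]) simp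
qed



definition cone_int :: "('a::euclidean_space \<Rightarrow> ennreal) \<Rightarrow> ennreal" where
  "cone_int \<psi> = (\<integral>\<^sup>+k. indicator (ball 0 1 - {0}) k * \<psi> (sgn k) \<partial>lborel)"

lemma lborel_scale_nn:
  fixes f :: "'a::euclidean_space \<Rightarrow> ennreal"
  assumes [measurable]: "f \<in> borel_measurable borel" and r: "r > 0"
  shows "(\<integral>\<^sup>+k. f k \<partial>lborel) = ennreal (r ^ DIM('a)) * (\<integral>\<^sup>+k. f (r *\<^sub>R k) \<partial>lborel)"
proof -
  have "(\<integral>\<^sup>+k. f k \<partial>lborel) =
     (\<integral>\<^sup>+k. f k \<partial>(density (distr lborel borel (\<lambda>x. 0 + r *\<^sub>R x)) (\<lambda>_. ennreal (\<bar>r\<bar> ^ DIM('a)))))"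
    using lborel_affine[of r "0::'a"] r by simp
  also have "\<dots> = (\<integral>\<^sup>+k. ennreal (\<bar>r\<bar> ^ DIM('a)) * f (r *\<^sub>R k) \<partial>lborel)"
    by (simp add: nn_integral_density nn_integral_distr)
  also have "\<dots> = ennreal (r ^ DIM('a)) * (\<integral>\<^sup>+k. f (r *\<^sub>R k) \<partial>lborel)"
    using r by (simp add: nn_integral_cmult)
  finally show ?thesis .
qed

lemma sphere_null: "sphere (c::'a::euclidean_space) r \<in> null_sets lborel"
  using negligible_sphere[of c r]
  by (auto simp: null_sets_completion_iff negligible_iff_null_sets negligible_convex_frontier)

lemma meas_cone:
  fixes \<psi> :: "'a::euclidean_space \<Rightarrow> ennreal"
  assumes "\<psi> \<in> borel_measurable borel" "S \<in> sets borel"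
  shows "(\<lambda>k. indicator S k * \<psi> (sgn k)) \<in> borel_measurable borel"
proof -
  note assms[measurable]
  show ?thesis by measurable
qed

lemma cone_ball:
  fixes \<psi> :: "'a::euclidean_space \<Rightarrow> ennreal"
  assumes [measurable]: "\<psi> \<in> borel_measurable borel" and r: "r > 0"
  shows "(\<integral>\<^sup>+k. indicator (ball 0 r - {0}) k * \<psi> (sgn k) \<partial>lborel) = ennreal (r ^ DIM('a)) * cone_int \<psi>"
proof -
  have "(\<integral>\<^sup>+k. indicator (ball 0 r - {0}) k * \<psi> (sgn k) \<partial>lborel) =
    ennreal (r ^ DIM('a)) * (\<integral>\<^sup>+k. indicator (ball 0 r - {0}) (r *\<^sub>R k) * \<psi> (sgn (r *\<^sub>R k)) \<partial>lborel)"
    by (rule lborel_scale_nn[OF meas_cone[OF assms(1)] r]) auto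
  also have "(\<integral>\<^sup>+k. indicator (ball 0 r - {0}) (r *\<^sub>R k) * \<psi> (sgn (r *\<^sub>R k)) \<partial>lborel) = cone_int \<psi>"
    unfolding cone_int_def
    by (intro nn_integral_cong) (use r in \<open>auto simp: sgn_scaleR split: split_indicator\<close>)
  finally show ?thesis .
qed

lemma cone_cball:
  fixes \<psi> :: "'a::euclidean_space \<Rightarrow> ennreal"
  assumes [measurable]: "\<psi> \<in> borel_measurable borel" and r: "r \<ge> 0"
  shows "(\<integral>\<^sup>+k. indicator (cball 0 r - {0}) k * \<psi> (sgn k) \<partial>lborel) = ennreal (r ^ DIM('a)) * cone_int \<psi>"
proof (cases "r = 0")
  case True
  have "cball 0 0 - {0::'a} = {}" by auto
  then show ?thesis using True by simp
next
  case False
  then have r: "r > 0" using r by simp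
  have "(\<integral>\<^sup>+k. indicator (cball 0 r - {0}) k * \<psi> (sgn k) \<partial>lborel) =
        (\<integral>\<^sup>+k. indicator (ball 0 r - {0}) k * \<psi> (sgn k) \<partial>lborel)"
  proof (rule nn_integral_cong_AE)
    have "AE k in lborel. k \<notin> sphere (0::'a) r"
      using sphere_null[of "0::'a" r] by (rule AE_not_in)
    then show "AE k in lborel. indicator (cball 0 r - {0}) k * \<psi> (sgn k) =
        indicator (ball 0 r - {0}) k * \<psi> (sgn k)"
      by eventually_elim (auto split: split_indicator)
  qed
  then show ?thesis using cone_ball[OF assms(1) r] by simp
qed



lemma poly_nn_int:
  assumes "0 \<le> a" "a \<le> R"
  shows "(\<integral>\<^sup>+r. ennreal (real DIM('a::euclidean_space) * r ^ (DIM('a) - 1)) * indicator {a..R} r \<partial>lborel)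
     = ennreal (R ^ DIM('a) - a ^ DIM('a))"
proof (rule nn_integral_FTC_Icc[where F="\<lambda>r. r ^ DIM('a)"])
  show "(\<lambda>r. real DIM('a) * r ^ (DIM('a) - 1)) \<in> borel_measurable borel" by measurable
  fix r :: real assume "r \<in> {a..R}"
  show "((\<lambda>r. r ^ DIM('a)) has_real_derivative real DIM('a) * r ^ (DIM('a) - 1)) (at r)"
    by (rule derivative_eq_intros refl)+ simp
  show "0 \<le> real DIM('a) * r ^ (DIM('a) - 1)" using \<open>r \<in> {a..R}\<close> assms by auto
qed (use assms in auto)

lemma radial:
  fixes \<psi> :: "'a::euclidean_space \<Rightarrow> ennreal" and \<phi> :: "real \<Rightarrow> ennreal"
  assumes [measurable]: "\<psi> \<in> borel_measurable borel" "\<phi> \<in> borel_measurable borel"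
    and fin: "cone_int \<psi> < \<infinity>" and R: "R > 0"
  shows "(\<integral>\<^sup>+k. indicator (ball 0 R - {0}) k * \<psi> (sgn k) * \<phi> (norm k) \<partial>lborel)
        = cone_int \<psi> * (\<integral>\<^sup>+r. ennreal (real DIM('a) * r ^ (DIM('a) - 1)) * indicator {0..R} r * \<phi> r \<partial>lborel)"
proof -
  define N where "N = DIM('a)"
  define c where "c = cone_int \<psi>"
  define X where "X = ball 0 R - {0::'a}"
  have Xs[measurable]: "X \<in> sets borel" unfolding X_def by auto
  define g where "g = (\<lambda>k::'a. indicator X k * \<psi> (sgn k))"
  have g[measurable]: "g \<in> borel_measurable borel" unfolding g_def by (rule meas_cone) auto
  define \<mu> where "\<mu> = density lborel g"
  define h where "h = (\<lambda>r::real. c * (ennreal (real N * r ^ (N - 1)) * indicator {0..R} r))"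
  have h[measurable]: "h \<in> borel_measurable borel" unfolding h_def by measurable
  define \<nu> where "\<nu> = density lborel h"
  obtain cr where cr: "c = ennreal cr" "cr \<ge> 0" using fin unfolding c_def
    by (cases "cone_int \<psi>") auto
  have emu: "emeasure \<mu> S = (\<integral>\<^sup>+k. indicator S k * \<psi> (sgn k) \<partial>lborel)"
    if "S \<in> sets borel" "S \<subseteq> X" for S
  proof -
    have "emeasure \<mu> S = (\<integral>\<^sup>+k. g k * indicator S k \<partial>lborel)"
      unfolding \<mu>_def using that by (simp add: emeasure_density)
    also have "\<dots> = (\<integral>\<^sup>+k. indicator S k * \<psi> (sgn k) \<partial>lborel)"
      using that unfolding g_def by (intro nn_integral_cong) (auto split: split_indicator)
    finally show ?thesis .
  qed
  have key: "emeasure (distr \<mu> borel norm) {a<..} = emeasure \<nu> {a<..} \<and> emeasure \<nu> {a<..} < \<infinity>" for a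
  proof -
    have e1: "emeasure (distr \<mu> borel norm) {a<..} = emeasure \<mu> {k. a < norm k}"
      unfolding \<mu>_def by (subst emeasure_distr) (auto intro!: arg_cong[where f="emeasure _"])
    have e2: "emeasure \<nu> {a<..} = (\<integral>\<^sup>+r. h r * indicator {a<..} r \<partial>lborel)"
      unfolding \<nu>_def by (simp add: emeasure_density)
    show ?thesis
    proof (cases "a < R")
      case False
      have "emeasure \<mu> {k. a < norm k} = (\<integral>\<^sup>+k. g k * indicator {k. a < norm k} k \<partial>lborel)"
        unfolding \<mu>_def by (simp add: emeasure_density)
      also have "\<dots> = (\<integral>\<^sup>+k. 0 \<partial>(lborel::'a measure))"
      proof -
        have z: "g k * indicator {k. a < norm k} k = 0" for k
          using False unfolding g_def X_def by (auto split: split_indicator)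
        show ?thesis by (intro nn_integral_cong) (simp only: z)
      qed
      finally have l: "emeasure \<mu> {k. a < norm k} = 0" by simp
      have "(\<integral>\<^sup>+r. h r * indicator {a<..} r \<partial>lborel) = (\<integral>\<^sup>+r. 0 \<partial>(lborel::real measure))"
        using False unfolding h_def by (intro nn_integral_cong) (auto split: split_indicator)
      then show ?thesis using e1 e2 l by simp
    next
      case True
      define a' where "a' = max a 0"
      have a': "0 \<le> a'" "a' < R" using True R unfolding a'_def by auto
      define Y where "Y = cball 0 a' - {0::'a}"
      have Ys[measurable]: "Y \<in> sets borel" unfolding Y_def by auto
      have YX: "Y \<subseteq> X" using a' unfolding X_def Y_def by auto
      have "emeasure \<mu> {k. a < norm k} = (\<integral>\<^sup>+k. g k * indicator {k. a < norm k} k \<partial>lborel)"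
        unfolding \<mu>_def by (simp add: emeasure_density)
      also have "\<dots> = (\<integral>\<^sup>+k. g k * indicator (X - Y) k \<partial>lborel)"
        unfolding g_def X_def Y_def a'_def
        by (intro nn_integral_cong) (auto split: split_indicator simp: max_def; metis dual_order.trans norm_le_zero_iff not_le)
      also have "\<dots> = emeasure \<mu> (X - Y)"
        unfolding \<mu>_def by (simp add: emeasure_density)
      also have "\<dots> = emeasure \<mu> X - emeasure \<mu> Y"
      proof (rule emeasure_Diff)
        have "emeasure \<mu> Y = ennreal (a' ^ N) * c"
          using emu[OF Ys YX] cone_cball[OF assms(1) a'(1)] unfolding Y_def c_def N_def by simp
        then show "emeasure \<mu> Y \<noteq> \<infinity>" using cr by (simp add: ennreal_mult_eq_top_iff)
      qed (use YX in \<open>auto simp: \<mu>_def\<close>)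
      also have "emeasure \<mu> X = ennreal (R ^ N) * c"
        using emu[OF Xs order_refl] cone_ball[OF assms(1) R] unfolding X_def c_def N_def by simp
      also have "emeasure \<mu> Y = ennreal (a' ^ N) * c"
        using emu[OF Ys YX] cone_cball[OF assms(1) a'(1)] unfolding Y_def c_def N_def by simp
      finally have l: "emeasure \<mu> {k. a < norm k} = ennreal (R ^ N) * c - ennreal (a' ^ N) * c" .
      have "(\<integral>\<^sup>+r. h r * indicator {a<..} r \<partial>lborel) =
            (\<integral>\<^sup>+r. c * (ennreal (real N * r ^ (N - 1)) * indicator {a'..R} r) \<partial>lborel)"
      proof (rule nn_integral_cong_AE)
        show "AE r in lborel. h r * indicator {a<..} r = c * (ennreal (real N * r ^ (N - 1)) * indicator {a'..R} r)"
          using AE_lborel_singleton[of a']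
          by eventually_elim (auto simp: h_def a'_def split: split_indicator)
      qed
      also have "\<dots> = c * ennreal (R ^ N - a' ^ N)"
        using poly_nn_int[OF a'(1) less_imp_le[OF a'(2)], where 'a='a]
        by (simp add: nn_integral_cmult N_def)
      finally have r: "(\<integral>\<^sup>+r. h r * indicator {a<..} r \<partial>lborel) = c * ennreal (R ^ N - a' ^ N)" .
      have pw: "a' ^ N \<le> R ^ N" using a' by (intro power_mono) auto
      have "ennreal (R ^ N) * c - ennreal (a' ^ N) * c = c * ennreal (R ^ N - a' ^ N)"
      proof -
        have "c * ennreal (R ^ N - a' ^ N) = ennreal (cr * (R ^ N - a' ^ N))"
          using cr pw by (simp add: ennreal_mult)
        also have "\<dots> = ennreal (R ^ N * cr) - ennreal (a' ^ N * cr)"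
          using cr a' by (subst ennreal_minus) (auto simp: algebra_simps)
        also have "\<dots> = ennreal (R ^ N) * c - ennreal (a' ^ N) * c"
          using cr a' R by (simp add: ennreal_mult)
        finally show ?thesis by simp
      qed
      then show ?thesis using e1 e2 l r cr by (simp add: ennreal_mult_less_top)
    qed
  qed
  have eq: "distr \<mu> borel norm = \<nu>"
    by (rule measure_eqI_lessThan) (use key in \<open>auto simp: \<nu>_def\<close>)
  have "(\<integral>\<^sup>+k. indicator (ball 0 R - {0}) k * \<psi> (sgn k) * \<phi> (norm k) \<partial>lborel)
       = (\<integral>\<^sup>+k. g k * \<phi> (norm k) \<partial>lborel)"
    unfolding g_def X_def by simp
  also have "\<dots> = (\<integral>\<^sup>+k. \<phi> (norm k) \<partial>\<mu>)"
    unfolding \<mu>_def by (simp add: nn_integral_density)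
  also have "\<dots> = (\<integral>\<^sup>+r. \<phi> r \<partial>distr \<mu> borel norm)"
    unfolding \<mu>_def by (simp add: nn_integral_distr)
  also have "\<dots> = (\<integral>\<^sup>+r. h r * \<phi> r \<partial>lborel)"
    unfolding eq \<nu>_def by (simp add: nn_integral_density)
  also have "\<dots> = c * (\<integral>\<^sup>+r. ennreal (real N * r ^ (N - 1)) * indicator {0..R} r * \<phi> r \<partial>lborel)"
    unfolding h_def by (simp add: nn_integral_cmult mult.assoc)
  finally show ?thesis unfolding c_def N_def .
qed



definition gdens :: "'a::euclidean_space \<Rightarrow> real" where
  "gdens k = (\<Prod>b\<in>Basis. std_normal_density (k \<bullet> b))"

lemma gdens_meas[measurable]: "gdens \<in> borel_measurable borel"
  unfolding gdens_def by measurable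

lemma gdens_nonneg: "gdens k \<ge> 0"
  unfolding gdens_def by (intro prod_nonneg) (auto simp: normal_density_nonneg)

lemma gdens_prod_emeasure:
  fixes A :: "'a::euclidean_space \<Rightarrow> real set"
  assumes A: "\<And>b. b \<in> Basis \<Longrightarrow> A b \<in> sets borel"
  shows "emeasure (density lborel (\<lambda>k::'a. ennreal (gdens k))) {k. \<forall>b\<in>Basis. k \<bullet> b \<in> A b}
    = (\<Prod>b\<in>Basis. emeasure (density lborel (\<lambda>x. ennreal (std_normal_density x))) (A b))"
proof -
  have ms: "{k::'a. \<forall>b\<in>Basis. k \<bullet> b \<in> A b} \<in> sets borel"
  proof -
    have "{k::'a. \<forall>b\<in>Basis. k \<bullet> b \<in> A b} = (\<Inter>b\<in>Basis. (\<lambda>k. k \<bullet> b) -` A b)" by auto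
    also have "\<dots> \<in> sets borel"
    proof (intro sets.finite_INT)
      fix b :: 'a assume b: "b \<in> Basis"
      have "(\<lambda>k::'a. k \<bullet> b) \<in> borel_measurable borel"
        by (intro borel_measurable_continuous_onI continuous_intros)
      from measurable_sets_borel[OF this A[OF b]] show "(\<lambda>k. k \<bullet> b) -` A b \<in> sets borel" by simp
    qed auto
    finally show ?thesis .
  qed
  have "emeasure (density lborel (\<lambda>k::'a. ennreal (gdens k))) {k. \<forall>b\<in>Basis. k \<bullet> b \<in> A b}
     = (\<integral>\<^sup>+k. ennreal (gdens k) * indicator {k::'a. \<forall>b\<in>Basis. k \<bullet> b \<in> A b} k \<partial>lborel)"
    using ms by (simp add: emeasure_density)
  also have "\<dots> = (\<integral>\<^sup>+k. (\<Prod>b\<in>Basis. ennreal (std_normal_density (k \<bullet> b)) * indicator (A b) (k \<bullet> b)) \<partial>lborel)"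
  proof (intro nn_integral_cong)
    fix k :: 'a
    have "ennreal (gdens k) = (\<Prod>b\<in>Basis. ennreal (std_normal_density (k \<bullet> b)))"
      unfolding gdens_def by (subst prod_ennreal) (auto simp: normal_density_nonneg)
    moreover have "indicator {k::'a. \<forall>b\<in>Basis. k \<bullet> b \<in> A b} k = (\<Prod>b\<in>Basis. indicator (A b) (k \<bullet> b) :: ennreal)"
      by (auto simp: indicator_def)
    ultimately show "ennreal (gdens k) * indicator {k::'a. \<forall>b\<in>Basis. k \<bullet> b \<in> A b} k =
        (\<Prod>b\<in>Basis. ennreal (std_normal_density (k \<bullet> b)) * indicator (A b) (k \<bullet> b))"
      by (simp add: prod.distrib)
  qed
  also have "\<dots> = (\<Prod>b\<in>Basis. (\<integral>\<^sup>+x. ennreal (std_normal_density x) * indicator (A b) x \<partial>lborel))"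
    by (rule nn_integral_lborel_prod) (use A in auto)
  also have "\<dots> = (\<Prod>b\<in>Basis. emeasure (density lborel (\<lambda>x. ennreal (std_normal_density x))) (A b))"
    using A by (intro prod.cong) (auto simp: emeasure_density)
  finally show ?thesis .
qed

lemma gauss_prob: "prob_space (density lborel (\<lambda>k::'a::euclidean_space. ennreal (gdens k)))"
proof
  have "emeasure (density lborel (\<lambda>k::'a. ennreal (gdens k))) {k. \<forall>b\<in>Basis. k \<bullet> b \<in> UNIV} = 1"
    using prob_space.emeasure_space_1[OF prob_space_normal_density[of 1 0]]
    by (subst gdens_prod_emeasure) auto
  then show "emeasure (density lborel (\<lambda>k::'a. ennreal (gdens k))) (space (density lborel (\<lambda>k::'a. ennreal (gdens k)))) = 1"
    by simp
qed

lemma gauss_marginal: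
  fixes b :: "'a::euclidean_space"
  assumes b: "b \<in> Basis"
  shows "distr (density lborel (\<lambda>k::'a. ennreal (gdens k))) lborel (\<lambda>k. k \<bullet> b)
       = density lborel (\<lambda>x. ennreal (std_normal_density x))"
proof (rule measure_eqI)
  fix S :: "real set" assume S: "S \<in> sets (distr (density lborel (\<lambda>k::'a. ennreal (gdens k))) lborel (\<lambda>k. k \<bullet> b))"
  then have Sb: "S \<in> sets borel" by simp
  have "emeasure (distr (density lborel (\<lambda>k::'a. ennreal (gdens k))) lborel (\<lambda>k. k \<bullet> b)) S
      = emeasure (density lborel (\<lambda>k::'a. ennreal (gdens k))) {k. \<forall>c\<in>Basis. k \<bullet> c \<in> (if c = b then S else UNIV)}"
    using Sb b by (subst emeasure_distr) (auto intro!: arg_cong[where f="emeasure _"])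
  also have "\<dots> = (\<Prod>c\<in>Basis. emeasure (density lborel (\<lambda>x. ennreal (std_normal_density x))) (if c = b then S else UNIV))"
    using Sb by (intro gdens_prod_emeasure) auto
  also have "\<dots> = emeasure (density lborel (\<lambda>x. ennreal (std_normal_density x))) S"
  proof -
    have u: "emeasure (density lborel (\<lambda>x. ennreal (std_normal_density x))) UNIV = 1"
      using prob_space.emeasure_space_1[OF prob_space_normal_density[of 1 0]] by simp
    show ?thesis
      using b by (subst prod.remove[of _ b]) (auto simp: u)
  qed
  finally show "emeasure (distr (density lborel (\<lambda>k::'a. ennreal (gdens k))) lborel (\<lambda>k. k \<bullet> b)) S
      = emeasure (density lborel (\<lambda>x. ennreal (std_normal_density x))) S" .
qed simp



lemma gauss_indep:
  "prob_space.indep_vars (density lborel (\<lambda>k::'a::euclidean_space. ennreal (gdens k))) (\<lambda>_. borel) (\<lambda>b k. k \<bullet> b) Basis"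
proof -
  define \<Gamma> where "\<Gamma> = density lborel (\<lambda>k::'a. ennreal (gdens k))"
  define S where "S = density lborel (\<lambda>x. ennreal (std_normal_density x))"
  interpret prob_space \<Gamma> unfolding \<Gamma>_def by (rule gauss_prob)
  have rv: "(\<lambda>k::'a. k \<bullet> b) \<in> \<Gamma> \<rightarrow>\<^sub>M borel" for b
    unfolding \<Gamma>_def by (simp add: borel_measurable_continuous_onI continuous_intros)
  have marg: "distr \<Gamma> borel (\<lambda>k. k \<bullet> b) = S" if "b \<in> Basis" for b
    using gauss_marginal[OF that] unfolding \<Gamma>_def S_def distr_def by simp
  interpret S: prob_space S unfolding S_def by (rule prob_space_normal_density) simp
  interpret PS: product_sigma_finite "\<lambda>_::'a. S"
    unfolding product_sigma_finite_def by (auto intro: S.sigma_finite_measure_axioms)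
  have "distr \<Gamma> (Pi\<^sub>M Basis (\<lambda>_. borel)) (\<lambda>k. \<lambda>b\<in>Basis. k \<bullet> b) = Pi\<^sub>M Basis (\<lambda>_. S)"
  proof (rule PS.PiM_eqI)
    show "sets (distr \<Gamma> (Pi\<^sub>M Basis (\<lambda>_. borel)) (\<lambda>k. \<lambda>b\<in>Basis. k \<bullet> b)) = sets (Pi\<^sub>M Basis (\<lambda>_. S))"
      unfolding sets_distr by (rule sets_PiM_cong) (auto simp: S_def)
    fix A :: "'a \<Rightarrow> real set" assume A: "\<And>i. i \<in> Basis \<Longrightarrow> A i \<in> sets S"
    then have A': "\<And>i. i \<in> Basis \<Longrightarrow> A i \<in> sets borel" unfolding S_def by simp
    have "emeasure (distr \<Gamma> (Pi\<^sub>M Basis (\<lambda>_. borel)) (\<lambda>k. \<lambda>b\<in>Basis. k \<bullet> b)) (Pi\<^sub>E Basis A)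
        = emeasure \<Gamma> ((\<lambda>k. \<lambda>b\<in>Basis. k \<bullet> b) -` Pi\<^sub>E Basis A \<inter> space \<Gamma>)"
      using A' by (intro emeasure_distr measurable_restrict rv sets_PiM_I_finite) auto
    also have "(\<lambda>k. \<lambda>b\<in>Basis. k \<bullet> b) -` Pi\<^sub>E Basis A \<inter> space \<Gamma> = {k. \<forall>b\<in>Basis. k \<bullet> b \<in> A b}"
      unfolding \<Gamma>_def by auto
    also have "emeasure \<Gamma> \<dots> = (\<Prod>b\<in>Basis. emeasure S (A b))"
      unfolding \<Gamma>_def S_def using A' by (rule gdens_prod_emeasure)
    finally show "emeasure (distr \<Gamma> (Pi\<^sub>M Basis (\<lambda>_. borel)) (\<lambda>k. \<lambda>b\<in>Basis. k \<bullet> b)) (Pi\<^sub>E Basis A)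
        = (\<Prod>b\<in>Basis. emeasure S (A b))" .
  qed simp
  also have "Pi\<^sub>M Basis (\<lambda>_. S) = Pi\<^sub>M Basis (\<lambda>b. distr \<Gamma> borel (\<lambda>k. k \<bullet> b))"
    using marg by (intro PiM_cong) auto
  finally have "indep_vars (\<lambda>_. borel) (\<lambda>b k. k \<bullet> b) Basis"
    by (subst indep_vars_iff_distr_eq_PiM') (use rv in auto)
  then show ?thesis unfolding \<Gamma>_def .
qed

lemma gauss_proj:
  fixes e :: "'a::euclidean_space"
  assumes e: "norm e = 1"
  shows "distributed (density lborel (\<lambda>k::'a. ennreal (gdens k))) lborel (\<lambda>k. k \<bullet> e)
           (\<lambda>x. ennreal (std_normal_density x))"
proof -
  define \<Gamma> where "\<Gamma> = density lborel (\<lambda>k::'a. ennreal (gdens k))"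
  interpret prob_space \<Gamma> unfolding \<Gamma>_def by (rule gauss_prob)
  define I where "I = {b\<in>Basis. e \<bullet> b \<noteq> 0}"
  have I: "finite I" "I \<subseteq> Basis" unfolding I_def by auto
  have Ine: "I \<noteq> {}"
  proof
    assume "I = {}"
    then have "\<forall>b\<in>Basis. e \<bullet> b = 0" unfolding I_def by auto
    then have "e = 0" by (simp add: euclidean_all_zero_iff)
    then show False using e by simp
  qed
  have ind: "indep_vars (\<lambda>_. borel) (\<lambda>b k. k \<bullet> b) Basis"
    using gauss_indep unfolding \<Gamma>_def .
  have ind2: "indep_vars (\<lambda>_. borel) (\<lambda>b k. 0 + (e \<bullet> b) * (k \<bullet> b)) I"
    using indep_vars_subset[OF indep_vars_compose2[OF ind, of "\<lambda>b x. 0 + (e \<bullet> b) * x" "\<lambda>_. borel"] I(2)]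
    by simp
  have dist1: "distributed \<Gamma> lborel (\<lambda>k. k \<bullet> b) (\<lambda>x. ennreal (normal_density 0 1 x))" if "b \<in> Basis" for b
    unfolding distributed_def
    using gauss_marginal[OF that] unfolding \<Gamma>_def
    by (auto simp: borel_measurable_continuous_onI continuous_intros)
  have dist2: "distributed \<Gamma> lborel (\<lambda>k. 0 + (e \<bullet> b) * (k \<bullet> b)) (\<lambda>x. ennreal (normal_density 0 \<bar>e \<bullet> b\<bar> x))"
    if "b \<in> I" for b
  proof -
    have "b \<in> Basis" "e \<bullet> b \<noteq> 0" using that unfolding I_def by auto
    have "distributed \<Gamma> lborel (\<lambda>k. 0 + (e \<bullet> b) * (k \<bullet> b))
       (\<lambda>x. ennreal (normal_density (0 + (e \<bullet> b) * 0) (\<bar>e \<bullet> b\<bar> * 1) x))"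
      by (rule normal_density_affine[OF dist1[OF \<open>b \<in> Basis\<close>]]) (use \<open>e \<bullet> b \<noteq> 0\<close> in auto)
    then show ?thesis by (simp only: mult_zero_right add_0_left mult_1_right)
  qed
  have D: "distributed \<Gamma> lborel (\<lambda>k. \<Sum>b\<in>I. 0 + (e \<bullet> b) * (k \<bullet> b))
          (\<lambda>x. ennreal (normal_density (\<Sum>b\<in>I. 0) (sqrt (\<Sum>b\<in>I. (\<bar>e \<bullet> b\<bar>)\<^sup>2)) x))"
  proof (rule sum_indep_normal[OF I(1) Ine ind2 _ dist2])
    fix b assume "b \<in> I" then show "0 < \<bar>e \<bullet> b\<bar>" unfolding I_def by simp
  qed
  have F: "(\<lambda>k. \<Sum>b\<in>I. 0 + (e \<bullet> b) * (k \<bullet> b)) = (\<lambda>k. k \<bullet> e)"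
  proof
    fix k :: 'a
    have "k \<bullet> e = (\<Sum>b\<in>Basis. (e \<bullet> b) * (k \<bullet> b))" by (subst euclidean_inner) (simp add: mult.commute)
    also have "\<dots> = (\<Sum>b\<in>I. (e \<bullet> b) * (k \<bullet> b))"
      by (rule sum.mono_neutral_right) (auto simp: I_def)
    finally show "(\<Sum>b\<in>I. 0 + (e \<bullet> b) * (k \<bullet> b)) = k \<bullet> e" by simp
  qed
  have Sq: "sqrt (\<Sum>b\<in>I. (\<bar>e \<bullet> b\<bar>)\<^sup>2) = 1"
  proof -
    have "(\<Sum>b\<in>I. (\<bar>e \<bullet> b\<bar>)\<^sup>2) = (\<Sum>b\<in>Basis. (e \<bullet> b)\<^sup>2)"
      by (simp only: power2_abs, rule sum.mono_neutral_left) (auto simp: I_def)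
    also have "\<dots> = e \<bullet> e" using euclidean_inner[of e e] by (simp add: power2_eq_square)
    also have "\<dots> = 1" using e by (simp add: dot_square_norm)
    finally show ?thesis by simp
  qed
  have Z: "(\<Sum>b\<in>I. (0::real)) = 0" by simp
  show ?thesis using D unfolding F Sq Z \<Gamma>_def .
qed



lemma gdens_exp: "exp (- (norm k)\<^sup>2 / 2) = sqrt (2 * pi) ^ DIM('a) * gdens (k::'a::euclidean_space)"
proof -
  have "gdens k = (\<Prod>b\<in>Basis. (1 / sqrt (2 * pi)) * exp (- (k \<bullet> b)\<^sup>2 / 2))"
    unfolding gdens_def by (simp add: std_normal_density_def)
  also have "\<dots> = (1 / sqrt (2 * pi)) ^ DIM('a) * exp (\<Sum>b\<in>Basis. - (k \<bullet> b)\<^sup>2 / 2)"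
    by (subst prod.distrib) (simp add: exp_sum)
  also have "(\<Sum>b\<in>Basis. - (k \<bullet> b)\<^sup>2 / 2) = - (norm k)\<^sup>2 / 2"
  proof -
    have "(norm k)\<^sup>2 = k \<bullet> k" by (rule power2_norm_eq_inner)
    also have "\<dots> = (\<Sum>b\<in>Basis. (k \<bullet> b) * (k \<bullet> b))" by (rule euclidean_inner)
    also have "\<dots> = (\<Sum>b\<in>Basis. (k \<bullet> b)\<^sup>2)" by (simp add: power2_eq_square)
    finally have "(norm k)\<^sup>2 = (\<Sum>b\<in>Basis. (k \<bullet> b)\<^sup>2)" .
    then show ?thesis by (simp add: sum_divide_distrib[symmetric] sum_negf)
  qed
  finally have "gdens k = (1 / sqrt (2 * pi)) ^ DIM('a) * exp (- (norm k)\<^sup>2 / 2)" .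
  then show ?thesis by (simp add: power_divide)
qed

lemma gauss_moment:
  fixes e :: "'a::euclidean_space"
  assumes e: "norm e = 1"
  shows "(\<integral>\<^sup>+k. ennreal (\<bar>k \<bullet> e\<bar> powr p * exp (- (norm k)\<^sup>2 / 2)) \<partial>lborel)
       = ennreal (sqrt (2 * pi) ^ DIM('a)) * (\<integral>\<^sup>+t. ennreal (std_normal_density t) * ennreal (\<bar>t\<bar> powr p) \<partial>lborel)"
proof -
  define c where "c = sqrt (2 * pi) ^ DIM('a)"
  have c: "c \<ge> 0" unfolding c_def by simp
  have "(\<integral>\<^sup>+k. ennreal (\<bar>k \<bullet> e\<bar> powr p * exp (- (norm k)\<^sup>2 / 2)) \<partial>lborel)
      = (\<integral>\<^sup>+k. ennreal c * (ennreal (gdens k) * ennreal (\<bar>k \<bullet> e\<bar> powr p)) \<partial>lborel)"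
  proof (intro nn_integral_cong)
    fix k :: 'a
    show "ennreal (\<bar>k \<bullet> e\<bar> powr p * exp (- (norm k)\<^sup>2 / 2)) = ennreal c * (ennreal (gdens k) * ennreal (\<bar>k \<bullet> e\<bar> powr p))"
      by (subst gdens_exp) (simp add: c_def gdens_nonneg ennreal_mult[symmetric] mult_ac)
  qed
  also have "\<dots> = ennreal c * (\<integral>\<^sup>+k. ennreal (gdens k) * ennreal (\<bar>k \<bullet> e\<bar> powr p) \<partial>lborel)"
    by (rule nn_integral_cmult) measurable
  also have "(\<integral>\<^sup>+k. ennreal (gdens k) * ennreal (\<bar>k \<bullet> e\<bar> powr p) \<partial>lborel)
      = (\<integral>\<^sup>+k. ennreal (\<bar>k \<bullet> e\<bar> powr p) \<partial>density lborel (\<lambda>k::'a. ennreal (gdens k)))"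
    by (subst nn_integral_density) auto
  also have "\<dots> = (\<integral>\<^sup>+t. ennreal (std_normal_density t) * ennreal (\<bar>t\<bar> powr p) \<partial>lborel)"
    by (rule distributed_nn_integral[OF gauss_proj[OF e], symmetric]) measurable
  finally show ?thesis unfolding c_def .
qed

lemma radial_full:
  fixes \<psi> :: "'a::euclidean_space \<Rightarrow> ennreal" and \<phi> :: "real \<Rightarrow> ennreal"
  assumes [measurable]: "\<psi> \<in> borel_measurable borel" "\<phi> \<in> borel_measurable borel"
    and fin: "cone_int \<psi> < \<infinity>"
  shows "(\<integral>\<^sup>+k. indicator (UNIV - {0}) k * \<psi> (sgn k) * \<phi> (norm k) \<partial>lborel)
        = cone_int \<psi> * (\<integral>\<^sup>+r. ennreal (real DIM('a) * r ^ (DIM('a) - 1)) * indicator {0..} r * \<phi> r \<partial>lborel)"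
proof -
  define f where "f = (\<lambda>n (k::'a). indicator (ball 0 (real (Suc n)) - {0}) k * \<psi> (sgn k) * \<phi> (norm k))"
  define h where "h = (\<lambda>n (r::real). ennreal (real DIM('a) * r ^ (DIM('a) - 1)) * indicator {0..real (Suc n)} r * \<phi> r)"
  have fm: "f n \<in> borel_measurable borel" for n
  proof -
    have "(\<lambda>k. indicator (ball 0 (real (Suc n)) - {0}) k * \<psi> (sgn k)) \<in> borel_measurable borel"
      by (rule meas_cone) auto
    then show ?thesis unfolding f_def by measurable
  qed
  have hm: "h n \<in> borel_measurable borel" for n unfolding h_def by measurable
  have l1: "(\<lambda>n. \<integral>\<^sup>+k. f n k \<partial>lborel) \<longlonglongrightarrow> (\<integral>\<^sup>+k. indicator (UNIV - {0}) k * \<psi> (sgn k) * \<phi> (norm k) \<partial>lborel)"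
  proof (rule nn_integral_LIMSEQ)
    show "incseq f"
      unfolding incseq_def f_def le_fun_def
      by (auto intro!: mult_right_mono split: split_indicator)
    show "(\<lambda>n. f n k) \<longlonglongrightarrow> indicator (UNIV - {0}) k * \<psi> (sgn k) * \<phi> (norm k)" for k
    proof (rule tendsto_eventually)
      obtain m :: nat where "norm k < m" using reals_Archimedean2 by blast
      then show "\<forall>\<^sub>F n in sequentially. f n k = indicator (UNIV - {0}) k * \<psi> (sgn k) * \<phi> (norm k)"
        unfolding eventually_sequentially f_def
        by (intro exI[of _ m]) (auto split: split_indicator)
    qed
  qed (use fm in auto)
  have l2: "(\<lambda>n. \<integral>\<^sup>+r. h n r \<partial>lborel) \<longlonglongrightarrow> (\<integral>\<^sup>+r. ennreal (real DIM('a) * r ^ (DIM('a) - 1)) * indicator {0..} r * \<phi> r \<partial>lborel)"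
  proof (rule nn_integral_LIMSEQ)
    show "incseq h"
      unfolding incseq_def h_def le_fun_def
      by (auto intro!: mult_right_mono split: split_indicator)
    show "(\<lambda>n. h n r) \<longlonglongrightarrow> ennreal (real DIM('a) * r ^ (DIM('a) - 1)) * indicator {0..} r * \<phi> r" for r
    proof (rule tendsto_eventually)
      obtain m :: nat where "r < m" using reals_Archimedean2 by blast
      then show "\<forall>\<^sub>F n in sequentially. h n r = ennreal (real DIM('a) * r ^ (DIM('a) - 1)) * indicator {0..} r * \<phi> r"
        unfolding eventually_sequentially h_def
        by (intro exI[of _ m]) (auto split: split_indicator)
    qed
  qed (use hm in auto)
  have eq: "(\<integral>\<^sup>+k. f n k \<partial>lborel) = cone_int \<psi> * (\<integral>\<^sup>+r. h n r \<partial>lborel)" for n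
    unfolding f_def h_def by (rule radial) (use fin in auto)
  have l3: "(\<lambda>n. \<integral>\<^sup>+k. f n k \<partial>lborel) \<longlonglongrightarrow> cone_int \<psi> * (\<integral>\<^sup>+r. ennreal (real DIM('a) * r ^ (DIM('a) - 1)) * indicator {0..} r * \<phi> r \<partial>lborel)"
  proof -
    have fin': "cone_int \<psi> < top" using fin by simp
    show ?thesis unfolding eq by (rule ennreal_tendsto_cmult[OF fin' l2])
  qed
  show ?thesis using LIMSEQ_unique[OF l1 l3] .
qed




lemma sgn_inner_le1: "\<bar>sgn k \<bullet> (e::'a::euclidean_space)\<bar> \<le> 1" if "norm e = 1"
proof -
  have "\<bar>sgn k \<bullet> e\<bar> \<le> norm (sgn k) * norm e" by (rule Cauchy_Schwarz_ineq2)
  also have "\<dots> \<le> 1" using that by (cases "k = 0") (auto simp: norm_sgn)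
  finally show ?thesis .
qed

lemma cone_fin:
  fixes e :: "'a::euclidean_space"
  assumes "p \<ge> 0" "norm e = 1"
  shows "cone_int (\<lambda>w. ennreal (\<bar>w \<bullet> e\<bar> powr p)) < \<infinity>"
proof -
  have "cone_int (\<lambda>w. ennreal (\<bar>w \<bullet> e\<bar> powr p)) \<le> (\<integral>\<^sup>+k. indicator (ball (0::'a) 1) k \<partial>lborel)"
    unfolding cone_int_def
  proof (intro nn_integral_mono)
    fix k :: 'a
    have "\<bar>sgn k \<bullet> e\<bar> powr p \<le> 1" using assms sgn_inner_le1[of e k] by (intro powr_le1) auto
    then show "indicator (ball 0 1 - {0}) k * ennreal (\<bar>sgn k \<bullet> e\<bar> powr p) \<le> indicator (ball 0 1) k"
      by (auto split: split_indicator)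
  qed
  also have "\<dots> = emeasure lborel (ball (0::'a) 1)" by simp
  also have "\<dots> < \<infinity>" by (rule emeasure_lborel_ball_finite)
  finally show ?thesis .
qed



lemma std_moment_fin:
  assumes "p \<ge> 0"
  shows "(\<integral>\<^sup>+t. ennreal (std_normal_density t) * ennreal (\<bar>t\<bar> powr p) \<partial>lborel) < \<infinity>"
proof -
  define n where "n = nat \<lceil>p\<rceil>"
  have bnd: "\<bar>t\<bar> powr p \<le> 1 + \<bar>t\<bar> ^ n" for t :: real
  proof (cases "\<bar>t\<bar> \<le> 1")
    case True
    then have "\<bar>t\<bar> powr p \<le> 1" using assms by (intro powr_le1) auto
    then show ?thesis by (smt (verit) zero_le_power abs_ge_zero)
  next
    case False
    have "\<bar>t\<bar> powr p \<le> \<bar>t\<bar> powr (real n)"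
      using False unfolding n_def by (intro powr_mono) (auto, linarith)
    also have "\<dots> = \<bar>t\<bar> ^ n" using False by (subst powr_realpow) auto
    finally show ?thesis by simp
  qed
  have "(\<integral>\<^sup>+t. ennreal (std_normal_density t) * ennreal (\<bar>t\<bar> powr p) \<partial>lborel)
      \<le> (\<integral>\<^sup>+t. ennreal (std_normal_density t + std_normal_density t * \<bar>t\<bar> ^ n) \<partial>lborel)"
  proof (intro nn_integral_mono)
    fix t :: real
    have "std_normal_density t * \<bar>t\<bar> powr p \<le> std_normal_density t * (1 + \<bar>t\<bar> ^ n)"
      by (intro mult_left_mono bnd) (simp add: normal_density_nonneg)
    then have "ennreal (std_normal_density t * \<bar>t\<bar> powr p) \<le> ennreal (std_normal_density t + std_normal_density t * \<bar>t\<bar> ^ n)"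
      by (intro ennreal_leI) (simp add: algebra_simps)
    moreover have "ennreal (std_normal_density t * \<bar>t\<bar> powr p) = ennreal (std_normal_density t) * ennreal (\<bar>t\<bar> powr p)"
      by (intro ennreal_mult) (auto simp: normal_density_nonneg)
    ultimately show "ennreal (std_normal_density t) * ennreal (\<bar>t\<bar> powr p) \<le> ennreal (std_normal_density t + std_normal_density t * \<bar>t\<bar> ^ n)"
      by simp
  qed
  also have "\<dots> = ennreal (\<integral>t. std_normal_density t + std_normal_density t * \<bar>t\<bar> ^ n \<partial>lborel)"
    by (intro nn_integral_eq_integral Bochner_Integration.integrable_add integrable_std_normal_moment_abs
        integrable_normal_density AE_I2) (auto intro!: add_nonneg_nonneg mult_nonneg_nonneg simp: normal_density_nonneg)
  also have "\<dots> < \<infinity>" by simp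
  finally show ?thesis .
qed



lemma C_pos:
  assumes "p \<ge> 0"
  shows "(\<integral>\<^sup>+r. ennreal (real DIM('a::euclidean_space) * r ^ (DIM('a) - 1)) * indicator {0..} r *
            ennreal (r powr p * exp (- r\<^sup>2 / 2)) \<partial>lborel) \<noteq> 0"
proof -
  have le: "(\<integral>\<^sup>+r. ennreal (exp (- 2)) * indicator {1..2::real} r \<partial>lborel) \<le>
     (\<integral>\<^sup>+r. ennreal (real DIM('a) * r ^ (DIM('a) - 1)) * indicator {0..} r *
            ennreal (r powr p * exp (- r\<^sup>2 / 2)) \<partial>lborel)"
  proof (intro nn_integral_mono)
    fix r :: real
    show "ennreal (exp (- 2)) * indicator {1..2} r \<le> ennreal (real DIM('a) * r ^ (DIM('a) - 1)) * indicator {0..} r *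
          ennreal (r powr p * exp (- r\<^sup>2 / 2))"
    proof (cases "r \<in> {1..2}")
      case True
      then have r: "1 \<le> r" "r \<le> 2" by auto
      have a1: "1 \<le> real DIM('a)" using DIM_positive[where 'a='a] by linarith
      have a2: "1 \<le> r ^ (DIM('a) - 1)" using r by (intro one_le_power) auto
      have a: "1 \<le> real DIM('a) * r ^ (DIM('a) - 1)" using mult_mono[OF a1 a2] by simp
      have b: "1 \<le> r powr p" using r assms by (simp add: ge_one_powr_ge_zero)
      have "r\<^sup>2 \<le> 2\<^sup>2" by (rule power_mono) (use r in auto)
      then have c: "exp (- 2) \<le> exp (- r\<^sup>2 / 2)" by simp
      have "exp (- 2) \<le> 1 * (1 * exp (- r\<^sup>2 / 2))" using c by simp
      also have "\<dots> \<le> (real DIM('a) * r ^ (DIM('a) - 1)) * (r powr p * exp (- r\<^sup>2 / 2))"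
        using a b by (intro mult_mono) auto
      finally have "ennreal (exp (- 2)) \<le> ennreal ((real DIM('a) * r ^ (DIM('a) - 1)) * (r powr p * exp (- r\<^sup>2 / 2)))"
        by (rule ennreal_leI)
      also have "\<dots> = ennreal (real DIM('a) * r ^ (DIM('a) - 1)) * ennreal (r powr p * exp (- r\<^sup>2 / 2))"
        using r by (intro ennreal_mult) auto
      finally show ?thesis using True r by simp
    qed simp
  qed
  have pos: "0 < (\<integral>\<^sup>+r. ennreal (exp (- 2)) * indicator {1..2::real} r \<partial>lborel)"
    by (simp add: nn_integral_cmult_indicator)
  have "0 < (\<integral>\<^sup>+r. ennreal (real DIM('a) * r ^ (DIM('a) - 1)) * indicator {0..} r *
            ennreal (r powr p * exp (- r\<^sup>2 / 2)) \<partial>lborel)"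
    using pos le by (rule order.strict_trans2)
  then show ?thesis by simp
qed



lemma cone_times_C:
  fixes e :: "'a::euclidean_space"
  assumes p: "p \<ge> 0" and e: "norm e = 1"
  shows "cone_int (\<lambda>w::'a. ennreal (\<bar>w \<bullet> e\<bar> powr p)) *
     (\<integral>\<^sup>+r. ennreal (real DIM('a) * r ^ (DIM('a) - 1)) * indicator {0..} r * ennreal (r powr p * exp (- r\<^sup>2 / 2)) \<partial>lborel)
   = ennreal (sqrt (2 * pi) ^ DIM('a)) * (\<integral>\<^sup>+t. ennreal (std_normal_density t) * ennreal (\<bar>t\<bar> powr p) \<partial>lborel)"
proof -
  have m1: "(\<lambda>w::'a. ennreal (\<bar>w \<bullet> e\<bar> powr p)) \<in> borel_measurable borel" by measurable
  have m2: "(\<lambda>r::real. ennreal (r powr p * exp (- r\<^sup>2 / 2))) \<in> borel_measurable borel" by measurable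
  have "cone_int (\<lambda>w::'a. ennreal (\<bar>w \<bullet> e\<bar> powr p)) *
     (\<integral>\<^sup>+r. ennreal (real DIM('a) * r ^ (DIM('a) - 1)) * indicator {0..} r * ennreal (r powr p * exp (- r\<^sup>2 / 2)) \<partial>lborel)
     = (\<integral>\<^sup>+k. indicator (UNIV - {0}) k * ennreal (\<bar>sgn k \<bullet> e\<bar> powr p) * ennreal (norm k powr p * exp (- (norm k)\<^sup>2 / 2)) \<partial>lborel)"
    using radial_full[OF m1 m2 cone_fin[OF p e]] by simp
  also have "\<dots> = (\<integral>\<^sup>+k. ennreal (\<bar>k \<bullet> e\<bar> powr p * exp (- (norm k)\<^sup>2 / 2)) \<partial>lborel)"
  proof (rule nn_integral_cong_AE)
    show "AE k in lborel. indicator (UNIV - {0}) k * ennreal (\<bar>sgn k \<bullet> e\<bar> powr p) * ennreal (norm k powr p * exp (- (norm k)\<^sup>2 / 2))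
        = ennreal (\<bar>k \<bullet> e\<bar> powr p * exp (- (norm k)\<^sup>2 / 2))"
      using AE_lborel_singleton[of "0::'a"]
    proof eventually_elim
      case (elim k)
      have "\<bar>sgn k \<bullet> e\<bar> * norm k = \<bar>k \<bullet> e\<bar>"
        using elim by (simp add: sgn_div_norm abs_mult)
      then have "\<bar>sgn k \<bullet> e\<bar> powr p * norm k powr p = \<bar>k \<bullet> e\<bar> powr p"
        by (simp add: powr_mult[symmetric])
      then have "ennreal (\<bar>sgn k \<bullet> e\<bar> powr p) * ennreal (norm k powr p * exp (- (norm k)\<^sup>2 / 2))
          = ennreal (\<bar>k \<bullet> e\<bar> powr p * exp (- (norm k)\<^sup>2 / 2))"
        by (subst ennreal_mult[symmetric]) (auto simp: mult.assoc[symmetric])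
      then show ?case using elim by simp
    qed
  qed
  also have "\<dots> = ennreal (sqrt (2 * pi) ^ DIM('a)) * (\<integral>\<^sup>+t. ennreal (std_normal_density t) * ennreal (\<bar>t\<bar> powr p) \<partial>lborel)"
    by (rule gauss_moment[OF e])
  finally show ?thesis .
qed

lemma cone_rot:
  fixes e1 e2 :: "'a::euclidean_space"
  assumes p: "p \<ge> 0" and e1: "norm e1 = 1" and e2: "norm e2 = 1"
  shows "cone_int (\<lambda>w::'a. ennreal (\<bar>w \<bullet> e1\<bar> powr p)) = cone_int (\<lambda>w::'a. ennreal (\<bar>w \<bullet> e2\<bar> powr p))"
proof -
  define C where "C = (\<integral>\<^sup>+r. ennreal (real DIM('a) * r ^ (DIM('a) - 1)) * indicator {0..} r * ennreal (r powr p * exp (- r\<^sup>2 / 2)) \<partial>lborel)"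
  define V where "V = ennreal (sqrt (2 * pi) ^ DIM('a)) * (\<integral>\<^sup>+t. ennreal (std_normal_density t) * ennreal (\<bar>t\<bar> powr p) \<partial>lborel)"
  define c1 where "c1 = cone_int (\<lambda>w::'a. ennreal (\<bar>w \<bullet> e1\<bar> powr p))"
  define c2 where "c2 = cone_int (\<lambda>w::'a. ennreal (\<bar>w \<bullet> e2\<bar> powr p))"
  have h1: "c1 * C = V" unfolding c1_def C_def V_def by (rule cone_times_C[OF p e1])
  have h2: "c2 * C = V" unfolding c2_def C_def V_def by (rule cone_times_C[OF p e2])
  have V: "V < \<infinity>" unfolding V_def using std_moment_fin[OF p] by (simp add: ennreal_mult_less_top)
  have C0: "C \<noteq> 0" unfolding C_def by (rule C_pos[OF p])
  show ?thesis
  proof (cases "C = \<infinity>")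
    case True
    have "c1 = 0" using h1 V True C0 by (cases "c1 = 0") (auto simp: ennreal_mult_eq_top_iff)
    moreover have "c2 = 0" using h2 V True C0 by (cases "c2 = 0") (auto simp: ennreal_mult_eq_top_iff)
    ultimately show ?thesis unfolding c1_def c2_def by simp
  next
    case False
    have "c1 = c1 * C / C" using C0 False by (simp add: ennreal_mult_divide_eq)
    also have "\<dots> = c2 * C / C" using h1 h2 by simp
    also have "\<dots> = c2" using C0 False by (simp add: ennreal_mult_divide_eq)
    finally show ?thesis unfolding c1_def c2_def .
  qed
qed



lemma K_const_eq:
  fixes e0 :: "'a::euclidean_space"
  assumes e0: "e0 = (SOME e::'a. e \<in> Basis)"
  shows "K_const TYPE('a) p = real DIM('a) * enn2real (cone_int (\<lambda>w::'a. ennreal (\<bar>w \<bullet> e0\<bar> powr p)))"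
proof -
  define T where "T = (\<lambda>x::'a. x /\<^sub>R norm x)"
  define Bo where "Bo = ball 0 1 - {0::'a}"
  have Tm: "T \<in> measurable (restrict_space lborel Bo) (restrict_space borel (sphere 0 1))"
  proof (rule measurable_restrict_space2)
    show "T \<in> space (restrict_space lborel Bo) \<rightarrow> sphere 0 1"
      unfolding T_def Bo_def by (auto simp: space_restrict_space)
    have "T \<in> borel_measurable borel" unfolding T_def by measurable
    then show "T \<in> restrict_space lborel Bo \<rightarrow>\<^sub>M borel"
      by (intro measurable_restrict_space1) simp
  qed
  have fm: "(\<lambda>w::'a. \<bar>w \<bullet> e0\<bar> powr p) \<in> borel_measurable (restrict_space borel (sphere 0 1))"
    by (intro measurable_restrict_space1) measurable
  have fm': "(\<lambda>w::'a. ennreal (\<bar>w \<bullet> e0\<bar> powr p)) \<in> borel_measurable (restrict_space borel (sphere 0 1))"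
    using fm by measurable
  have "K_const TYPE('a) p = integral\<^sup>L sphere_measure (\<lambda>w::'a. \<bar>w \<bullet> e0\<bar> powr p)"
    unfolding K_const_def Let_def e0 ..
  also have "\<dots> = enn2real (\<integral>\<^sup>+w. ennreal (\<bar>w \<bullet> e0\<bar> powr p) \<partial>sphere_measure)"
    by (rule integral_eq_nn_integral) (use fm in \<open>auto simp: sphere_measure_def\<close>)
  also have "(\<integral>\<^sup>+w. ennreal (\<bar>w \<bullet> e0\<bar> powr p) \<partial>(sphere_measure::'a measure))
     = ennreal (real DIM('a)) * (\<integral>\<^sup>+w. ennreal (\<bar>w \<bullet> e0\<bar> powr p) \<partial>distr (restrict_space lborel Bo) (restrict_space borel (sphere 0 1)) T)"
    unfolding sphere_measure_def T_def[symmetric] Bo_def[symmetric]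
    by (rule nn_integral_scale_measure) (use fm' in simp)
  also have "(\<integral>\<^sup>+w. ennreal (\<bar>w \<bullet> e0\<bar> powr p) \<partial>distr (restrict_space lborel Bo) (restrict_space borel (sphere 0 1)) T)
     = (\<integral>\<^sup>+x. ennreal (\<bar>T x \<bullet> e0\<bar> powr p) \<partial>restrict_space lborel Bo)"
    by (rule nn_integral_distr[OF Tm]) (use fm' in simp)
  also have "\<dots> = (\<integral>\<^sup>+x. ennreal (\<bar>T x \<bullet> e0\<bar> powr p) * indicator Bo x \<partial>lborel)"
    by (rule nn_integral_restrict_space) (simp add: Bo_def)
  also have "\<dots> = cone_int (\<lambda>w::'a. ennreal (\<bar>w \<bullet> e0\<bar> powr p))"
    unfolding cone_int_def Bo_def T_def by (intro nn_integral_cong) (simp add: sgn_div_norm mult.commute)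
  finally show ?thesis by (simp add: enn2real_mult)
qed



lemma change_var:
  fixes F :: "'a::euclidean_space \<Rightarrow> real"
  assumes [measurable]: "F \<in> borel_measurable borel" and d: "d > 0"
  shows "(LINT y : ball x d | lborel. F y) = (\<integral>k. d ^ DIM('a) * (indicator (ball 0 1) k * F (x + d *\<^sub>R k)) \<partial>lborel)"
proof -
  have "(LINT y : ball x d | lborel. F y) = (\<integral>y. indicator (ball x d) y * F y \<partial>lborel)"
    by (simp add: set_lebesgue_integral_def)
  also have "\<dots> = (\<integral>y. indicator (ball x d) y * F y \<partial>(density (distr lborel borel (\<lambda>k. x + d *\<^sub>R k)) (\<lambda>_. ennreal (\<bar>d\<bar> ^ DIM('a)))))"
    using lborel_affine[of d x] d by simp
  also have "\<dots> = (\<integral>y. \<bar>d\<bar> ^ DIM('a) *\<^sub>R (indicator (ball x d) y * F y) \<partial>distr lborel borel (\<lambda>k. x + d *\<^sub>R k))"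
  proof (rule integral_density)
    show "(\<lambda>y. indicator (ball x d) y * F y) \<in> borel_measurable (distr lborel borel (\<lambda>k. x + d *\<^sub>R k))"
      by (simp, intro borel_measurable_times borel_measurable_indicator) auto
  qed auto
  also have "\<dots> = (\<integral>k. \<bar>d\<bar> ^ DIM('a) *\<^sub>R (indicator (ball x d) (x + d *\<^sub>R k) * F (x + d *\<^sub>R k)) \<partial>lborel)"
  proof (rule integral_distr)
    show "(\<lambda>y. \<bar>d\<bar> ^ DIM('a) *\<^sub>R (indicator (ball x d) y * F y)) \<in> borel_measurable borel"
      by (intro borel_measurable_scaleR borel_measurable_times borel_measurable_indicator borel_measurable_const) auto
  qed auto
  also have "\<dots> = (\<integral>k. d ^ DIM('a) * (indicator (ball 0 1) k * F (x + d *\<^sub>R k)) \<partial>lborel)"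
  proof (intro Bochner_Integration.integral_cong refl)
    fix k :: 'a
    have "x + d *\<^sub>R k \<in> ball x d \<longleftrightarrow> k \<in> ball 0 1"
      using d by (simp add: dist_norm)
    then show "\<bar>d\<bar> ^ DIM('a) *\<^sub>R (indicator (ball x d) (x + d *\<^sub>R k) * F (x + d *\<^sub>R k)) =
        d ^ DIM('a) * (indicator (ball 0 1) k * F (x + d *\<^sub>R k))"
      using d by (simp split: split_indicator)
  qed
  finally show ?thesis .
qed

lemma G_comp_meas:
  fixes h :: "'b \<Rightarrow> real"
  assumes H: "hyp_H G p" and h: "h \<in> borel_measurable M" and hnn: "\<And>y. h y \<ge> 0"
  shows "(\<lambda>y. G (h y)) \<in> borel_measurable M"
proof -
  define G' where "G' = (\<lambda>t. G (max 0 t))"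
  have "continuous_on UNIV G'"
    unfolding G'_def
    by (rule continuous_on_compose2[OF hypH_facts(1)[OF H]]) (auto intro!: continuous_intros)
  then have G'm: "G' \<in> borel_measurable borel" by (rule borel_measurable_continuous_onI)
  have "(\<lambda>y. G' (h y)) \<in> borel_measurable M" by (rule measurable_compose[OF h G'm])
  moreover have "(\<lambda>y. G' (h y)) = (\<lambda>y. G (h y))" unfolding G'_def using hnn by (simp add: max_def)
  ultimately show ?thesis by simp
qed

lemma pointwise_cv:
  fixes u :: "'a::euclidean_space \<Rightarrow> real" and k :: 'a
  assumes d: "d > 0" and G0: "G 0 = 0"
  shows "d ^ DIM('a) * (indicator (ball 0 1) k * (G (\<bar>u x - u (x + d *\<^sub>R k)\<bar> / dist x (x + d *\<^sub>R k) powr s) / dist x (x + d *\<^sub>R k) ^ DIM('a)))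
    = indicator (ball 0 1) k * G (d powr (1 - s) * (\<bar>u (x + d *\<^sub>R k) - u x\<bar> / (d * norm k powr s))) / norm k ^ DIM('a)"
proof (cases "k = 0")
  case True then show ?thesis by simp
next
  case False
  have dist: "dist x (x + d *\<^sub>R k) = d * norm k" using d by (simp add: dist_norm)
  have nk: "norm k > 0" using False by simp
  have arg: "\<bar>u x - u (x + d *\<^sub>R k)\<bar> / (d * norm k) powr s = d powr (1 - s) * (\<bar>u (x + d *\<^sub>R k) - u x\<bar> / (d * norm k powr s))"
  proof -
    have "(d * norm k) powr s = d powr s * norm k powr s" using d nk by (simp add: powr_mult)
    moreover have "d powr (1 - s) = d / d powr s" using d by (simp add: powr_diff)
    ultimately show ?thesis using d nk by (simp add: abs_minus_commute field_simps)
  qed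
  define A where "A = G (d powr (1 - s) * (\<bar>u (x + d *\<^sub>R k) - u x\<bar> / (d * norm k powr s)))"
  have "d ^ DIM('a) * (A / (d * norm k) ^ DIM('a)) = A / norm k ^ DIM('a)"
    using d nk by (simp add: power_mult_distrib)
  then show ?thesis unfolding dist arg A_def[symmetric]
    by (cases "k \<in> ball 0 1") auto
qed



lemma radial_powr_int:
  assumes q: "q > 0" and c: "c \<ge> 0"
  shows "(\<integral>\<^sup>+r. ennreal (real DIM('a::euclidean_space) * r ^ (DIM('a) - 1)) * indicator {0..1} r *
            ennreal (c * r powr q / r ^ DIM('a)) \<partial>lborel) = ennreal (real DIM('a) * c / q)"
proof -
  define N where "N = DIM('a)"
  have N: "N \<ge> 1" unfolding N_def using DIM_positive[where 'a='a] by linarith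
  have "(\<integral>\<^sup>+r. ennreal (real N * r ^ (N - 1)) * indicator {0..1} r * ennreal (c * r powr q / r ^ N) \<partial>lborel)
      = (\<integral>\<^sup>+r. ennreal (real N * c) * ennreal (indicator {0..1} r * r powr (q - 1)) \<partial>lborel)"
  proof (rule nn_integral_cong_AE)
    show "AE r in lborel. ennreal (real N * r ^ (N - 1)) * indicator {0..1} r * ennreal (c * r powr q / r ^ N)
        = ennreal (real N * c) * ennreal (indicator {0..1} r * r powr (q - 1))"
      using AE_lborel_singleton[of 0]
    proof eventually_elim
      case (elim r)
      show ?case
      proof (cases "r \<in> {0..1}")
        case True
        then have r: "r > 0" using elim by auto
        have rN: "r ^ N = r * r ^ (N - 1)" using N by (cases N) auto
        have "r ^ (N - 1) * (c * r powr q / r ^ N) = c * (r powr q / r)"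
          using r unfolding rN by (simp add: field_simps)
        also have "r powr q / r = r powr (q - 1)" using r by (simp add: powr_diff)
        finally have eq: "r ^ (N - 1) * (c * r powr q / r ^ N) = c * r powr (q - 1)" .
        have "ennreal (real N * r ^ (N - 1)) * ennreal (c * r powr q / r ^ N) = ennreal (real N * (r ^ (N - 1) * (c * r powr q / r ^ N)))"
          using r c by (simp add: ennreal_mult[symmetric] mult.assoc)
        also have "\<dots> = ennreal (real N * c) * ennreal (r powr (q - 1))"
          unfolding eq using r c by (simp add: ennreal_mult[symmetric] mult.assoc)
        finally show ?thesis using True by simp
      qed simp
    qed
  qed
  also have "\<dots> = ennreal (real N * c) * (\<integral>\<^sup>+r. ennreal (indicator {0..1} r * r powr (q - 1)) \<partial>lborel)"
    by (rule nn_integral_cmult) measurable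
  also have "(\<integral>\<^sup>+r. ennreal (indicator {0..1} r * r powr (q - 1)) \<partial>lborel) = ennreal (1 powr (q - 1 + 1) / (q - 1 + 1))"
    by (rule nn_integral_has_integral_lebesgue[OF _ has_integral_powr_from_0]) (use q in auto)
  also have "ennreal (real N * c) * ennreal (1 powr (q - 1 + 1) / (q - 1 + 1)) = ennreal (real N * c / q)"
    using q c by (simp add: ennreal_mult[symmetric])
  finally show ?thesis unfolding N_def .
qed

lemma cone_one_fin: "cone_int (\<lambda>w::'a::euclidean_space. 1) < \<infinity>"
proof -
  have "cone_int (\<lambda>w::'a. 1) \<le> (\<integral>\<^sup>+k. indicator (ball (0::'a) 1) k \<partial>lborel)"
    unfolding cone_int_def by (intro nn_integral_mono) (auto split: split_indicator)
  also have "\<dots> = emeasure lborel (ball (0::'a) 1)" by simp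
  also have "\<dots> < \<infinity>" by (rule emeasure_lborel_ball_finite)
  finally show ?thesis .
qed

lemma dom_integrable:
  assumes s: "0 < s" "s < 1" and M: "M \<ge> 0"
  shows "integrable lborel (\<lambda>k::'a::euclidean_space. indicator (ball 0 1) k * (M * norm k powr (1 - s)) / norm k ^ DIM('a))"
proof (rule integrableI_nonneg)
  have "(\<lambda>k::'a. indicator (ball 0 1) k * (M * norm k powr (1 - s)) / norm k ^ DIM('a)) \<in> borel_measurable borel"
  proof -
    have [measurable]: "ball (0::'a) 1 \<in> sets borel" by simp
    show ?thesis by measurable
  qed
  then show "(\<lambda>k::'a. indicator (ball 0 1) k * (M * norm k powr (1 - s)) / norm k ^ DIM('a)) \<in> borel_measurable lborel"
    by simp
  show "AE k in lborel. 0 \<le> indicator (ball 0 1) k * (M * norm (k::'a) powr (1 - s)) / norm k ^ DIM('a)"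
    using M by (auto split: split_indicator)
  have "(\<integral>\<^sup>+k. ennreal (indicator (ball 0 1) k * (M * norm (k::'a) powr (1 - s)) / norm k ^ DIM('a)) \<partial>lborel)
      = (\<integral>\<^sup>+k. indicator (ball 0 1 - {0}) k * (\<lambda>w::'a. 1) (sgn k) * ennreal (M * norm k powr (1 - s) / norm k ^ DIM('a)) \<partial>lborel)"
    by (intro nn_integral_cong) (auto split: split_indicator)
  also have "\<dots> = cone_int (\<lambda>w::'a. 1) * (\<integral>\<^sup>+r. ennreal (real DIM('a) * r ^ (DIM('a) - 1)) * indicator {0..1} r *
            ennreal (M * r powr (1 - s) / r ^ DIM('a)) \<partial>lborel)"
    by (rule radial) (use cone_one_fin in auto)
  also have "\<dots> = cone_int (\<lambda>w::'a. 1) * ennreal (real DIM('a) * M / (1 - s))"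
    using radial_powr_int[of "1 - s" M, where 'a='a] s M by simp
  also have "\<dots> < \<infinity>" using cone_one_fin[where 'a='a] by (simp add: ennreal_mult_less_top)
  finally show "(\<integral>\<^sup>+k. ennreal (indicator (ball 0 1) k * (M * norm (k::'a) powr (1 - s)) / norm k ^ DIM('a)) \<partial>lborel) < \<infinity>" .
qed



lemma value_int:
  fixes v :: "'a::euclidean_space"
  assumes p: "p > 0" and s: "0 < s" "s < 1"
  shows "p * (1 - s) * (\<integral>k. indicator (ball 0 1) k * (\<bar>v \<bullet> k\<bar> / norm k powr s) powr p / norm k ^ DIM('a) \<partial>lborel)
     = K_const TYPE('a) p * norm v powr p"
proof (cases "v = 0")
  case True then show ?thesis by simp
next
  case False
  define N where "N = DIM('a)"
  define e where "e = v /\<^sub>R norm v"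
  have e: "norm e = 1" using False unfolding e_def by simp
  define e0 where "e0 = (SOME e::'a. e \<in> Basis)"
  have e0B: "e0 \<in> Basis" unfolding e0_def by (rule someI_ex) (use nonempty_Basis in blast)
  have e0: "norm e0 = 1" using e0B by simp
  define \<psi> where "\<psi> = (\<lambda>w::'a. ennreal (\<bar>w \<bullet> e\<bar> powr p))"
  have \<psi>m: "\<psi> \<in> borel_measurable borel" unfolding \<psi>_def by measurable
  define f where "f = (\<lambda>k::'a. indicator (ball 0 1) k * (\<bar>v \<bullet> k\<bar> / norm k powr s) powr p / norm k ^ DIM('a))"
  have fm: "f \<in> borel_measurable lborel"
  proof -
    have [measurable]: "ball (0::'a) 1 \<in> sets borel" by simp
    show ?thesis unfolding f_def by measurable
  qed
  have fnn: "f k \<ge> 0" for k unfolding f_def by (auto split: split_indicator)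
  have "(\<integral>\<^sup>+k. ennreal (f k) \<partial>lborel)
      = (\<integral>\<^sup>+k. indicator (ball 0 1 - {0}) k * \<psi> (sgn k) * ennreal (norm v powr p * norm k powr (p * (1 - s)) / norm k ^ N) \<partial>lborel)"
  proof (intro nn_integral_cong)
    fix k :: 'a
    show "ennreal (f k) = indicator (ball 0 1 - {0}) k * \<psi> (sgn k) * ennreal (norm v powr p * norm k powr (p * (1 - s)) / norm k ^ N)"
    proof (cases "k \<in> ball 0 1 - {0}")
      case True
      then have k: "k \<noteq> 0" "norm k > 0" by auto
      have vk: "\<bar>v \<bullet> k\<bar> = norm v * (\<bar>sgn k \<bullet> e\<bar> * norm k)"
        using False k unfolding e_def by (simp add: sgn_div_norm abs_mult inner_commute)
      have "\<bar>v \<bullet> k\<bar> / norm k powr s = norm v * \<bar>sgn k \<bullet> e\<bar> * norm k powr (1 - s)"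
        unfolding vk using k by (simp add: powr_diff field_simps)
      then have "(\<bar>v \<bullet> k\<bar> / norm k powr s) powr p = \<bar>sgn k \<bullet> e\<bar> powr p * (norm v powr p * norm k powr (p * (1 - s)))"
        by (simp add: powr_mult powr_powr mult_ac)
      then have fk: "f k = \<bar>sgn k \<bullet> e\<bar> powr p * (norm v powr p * norm k powr (p * (1 - s)) / norm k ^ N)"
        unfolding f_def N_def using True by simp
      have "ennreal (f k) = ennreal (\<bar>sgn k \<bullet> e\<bar> powr p) * ennreal (norm v powr p * norm k powr (p * (1 - s)) / norm k ^ N)"
        unfolding fk by (rule ennreal_mult) auto
      then show ?thesis using True unfolding \<psi>_def by simp
    next
      case False
      then have "f k = 0" unfolding f_def by (auto split: split_indicator)
      then show ?thesis using False by simp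
    qed
  qed
  also have "\<dots> = cone_int \<psi> * (\<integral>\<^sup>+r. ennreal (real DIM('a) * r ^ (DIM('a) - 1)) * indicator {0..1} r *
            ennreal (norm v powr p * r powr (p * (1 - s)) / r ^ DIM('a)) \<partial>lborel)"
    unfolding N_def by (rule radial[OF \<psi>m]) (use cone_fin[OF _ e, of p] p in \<open>auto simp: \<psi>_def\<close>)
  also have "\<dots> = cone_int \<psi> * ennreal (real N * norm v powr p / (p * (1 - s)))"
    using radial_powr_int[of "p * (1 - s)" "norm v powr p", where 'a='a] p s unfolding N_def by simp
  finally have nn: "(\<integral>\<^sup>+k. ennreal (f k) \<partial>lborel) = cone_int \<psi> * ennreal (real N * norm v powr p / (p * (1 - s)))" .
  have rot: "cone_int \<psi> = cone_int (\<lambda>w::'a. ennreal (\<bar>w \<bullet> e0\<bar> powr p))"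
    unfolding \<psi>_def by (rule cone_rot) (use p e e0 in auto)
  have K: "K_const TYPE('a) p = real N * enn2real (cone_int \<psi>)"
    unfolding rot N_def by (rule K_const_eq[OF e0_def])
  have "(\<integral>k. f k \<partial>lborel) = enn2real (\<integral>\<^sup>+k. ennreal (f k) \<partial>lborel)"
    by (rule integral_eq_nn_integral[OF fm]) (use fnn in auto)
  also have "\<dots> = enn2real (cone_int \<psi>) * (real N * norm v powr p / (p * (1 - s)))"
    unfolding nn using p s by (simp add: enn2real_mult)
  finally have "(\<integral>k. f k \<partial>lborel) = enn2real (cone_int \<psi>) * (real N * norm v powr p / (p * (1 - s)))" .
  then show ?thesis unfolding f_def[symmetric] K using p s by (simp add: field_simps)
qed



theorem proposition3p1:
  fixes u :: "'a::euclidean_space \<Rightarrow> real" and G :: "real \<Rightarrow> real"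
    and s p :: real and x :: 'a
  assumes "0 < s" "s < 1"
    and "hyp_H G p"
    and "C2c u"
  shows "((\<lambda>\<delta>. p * (1 - s) / G (\<delta> powr (1 - s)) *
            (LINT y : ball x \<delta> | lborel.
               G (\<bar>u x - u y\<bar> / dist x y powr s) / dist x y ^ DIM('a)))
          \<longlongrightarrow> K_const TYPE('a) p * norm (grad u x) powr p) (at_right 0)"
proof -
  note H = assms(3)
  have p1: "p > 1" by (rule hypH_p_gt1[OF H])
  obtain D where D: "\<And>y. (u has_derivative blinfun_apply (D y)) (at y)" and cD: "continuous_on UNIV D"
    using C2c_deriv[OF assms(4)] by blast
  define v where "v = grad u x"
  have Dv: "blinfun_apply (D x) h = v \<bullet> h" for h unfolding v_def by (rule grad_eq[OF D])
  obtain L where L: "L \<ge> 0" "\<forall>y\<in>cball x 1. \<bar>u y - u x\<bar> \<le> L * norm (y - x)"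
    using local_lipschitz[OF D cD] by blast
  obtain C where C: "C \<ge> 1" "\<forall>t>0. \<forall>b. 0 \<le> b \<and> b \<le> L \<longrightarrow> G (t * b) / G t \<le> C * b"
    using hypH_ratio_bound[OF H] by blast
  have ucont: "continuous_on UNIV u"
    using D by (intro continuous_at_imp_continuous_on ballI has_derivative_continuous) auto
  have um[measurable]: "u \<in> borel_measurable borel" by (rule borel_measurable_continuous_onI[OF ucont])
  have ball_m[measurable]: "ball (0::'a) 1 \<in> sets borel" by simp
  have Gpos: "G t > 0" if "t > 0" for t using hypH_facts(8)[OF H that] .
  have Gnn: "G t \<ge> 0" if "t \<ge> 0" for t using hypH_facts(4)[OF H that] .
  define t where "t = (\<lambda>d::real. \<bar>d\<bar> powr (1 - s))"
  define bq where "bq = (\<lambda>d (k::'a). \<bar>u (x + d *\<^sub>R k) - u x\<bar> / (\<bar>d\<bar> * norm k powr s))"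
  define S where "S = (\<lambda>d k. indicator (ball 0 1) k * (G (t d * bq d k) / G (t d)) / norm k ^ DIM('a))"
  define f where "f = (\<lambda>k::'a. indicator (ball 0 1) k * (\<bar>v \<bullet> k\<bar> / norm k powr s) powr p / norm k ^ DIM('a))"
  define w where "w = (\<lambda>k::'a. indicator (ball 0 1) k * ((C * L) * norm k powr (1 - s)) / norm k ^ DIM('a))"
  define F where "F = (\<lambda>y. G (\<bar>u x - u y\<bar> / dist x y powr s) / dist x y ^ DIM('a))"
  have Fm: "F \<in> borel_measurable borel"
  proof -
    have "(\<lambda>y. G (\<bar>u x - u y\<bar> / dist x y powr s)) \<in> borel_measurable borel"
      by (rule G_comp_meas[OF H]) auto
    then show ?thesis unfolding F_def by measurable
  qed
  have bqnn: "bq d k \<ge> 0" for d k unfolding bq_def by auto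
  have Sm: "S d \<in> borel_measurable lborel" for d
  proof -
    have "(\<lambda>k. G (t d * bq d k)) \<in> borel_measurable borel"
      by (intro G_comp_meas[OF H]) (auto simp: t_def bq_def)
    then show ?thesis unfolding S_def by measurable
  qed
  have fm: "f \<in> borel_measurable lborel" unfolding f_def by measurable
  have wint: "integrable lborel w"
    unfolding w_def by (rule dom_integrable) (use assms(1,2) L C in auto)
  have eq1: "p * (1 - s) / G (d powr (1 - s)) * (LINT y : ball x d | lborel. F y) = p * (1 - s) * (\<integral>k. S d k \<partial>lborel)"
    if d: "d > 0" for d
  proof -
    have "(LINT y : ball x d | lborel. F y) = (\<integral>k. d ^ DIM('a) * (indicator (ball 0 1) k * F (x + d *\<^sub>R k)) \<partial>lborel)"
      by (rule change_var[OF Fm d])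
    also have "\<dots> = (\<integral>k. indicator (ball 0 1) k * G (t d * bq d k) / norm k ^ DIM('a) \<partial>lborel)"
    proof (intro Bochner_Integration.integral_cong refl)
      fix k :: 'a
      show "d ^ DIM('a) * (indicator (ball 0 1) k * F (x + d *\<^sub>R k)) = indicator (ball 0 1) k * G (t d * bq d k) / norm k ^ DIM('a)"
        unfolding F_def using pointwise_cv[where G=G and u=u and x=x and s=s and k=k and d=d, OF d hypH_facts(5)[OF H]] d
        by (simp add: t_def bq_def)
    qed
    finally have "(LINT y : ball x d | lborel. F y) / G (t d) = (\<integral>k. indicator (ball 0 1) k * G (t d * bq d k) / norm k ^ DIM('a) / G (t d) \<partial>lborel)"
      by (simp only: integral_divide_zero)
    also have "\<dots> = (\<integral>k. S d k \<partial>lborel)"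
      unfolding S_def by (intro Bochner_Integration.integral_cong refl) (simp add: field_simps)
    finally have X: "(LINT y : ball x d | lborel. F y) / G (d powr (1 - s)) = (\<integral>k. S d k \<partial>lborel)"
      unfolding t_def using d by simp
    have "p * (1 - s) / G (d powr (1 - s)) * (LINT y : ball x d | lborel. F y)
        = p * (1 - s) * ((LINT y : ball x d | lborel. F y) / G (d powr (1 - s)))"
      by (simp add: divide_inverse mult_ac)
    then show ?thesis unfolding X .
  qed
  have tf: "filterlim t (at_right 0) (at_right 0)"
  proof (rule tendsto_imp_filterlim_at_right)
    show "(t \<longlongrightarrow> 0) (at_right 0)"
      unfolding t_def
      by (rule tendsto_zero_powrI[OF tendsto_rabs_zero[OF tendsto_ident_at] tendsto_const]) (use assms(2) in \<open>auto intro: eventually_at_right_less[THEN eventually_mono]\<close>)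
    show "\<forall>\<^sub>F d in at_right 0. 0 < t d"
      unfolding t_def using eventually_at_right_less[of "0::real"] by eventually_elim simp
  qed
  have ptlim: "((\<lambda>d. S d k) \<longlongrightarrow> f k) (at_right 0)" for k
  proof (cases "k \<in> ball 0 1 - {0}")
    case False
    then have "S d k = 0" "f k = 0" for d unfolding S_def f_def by (auto split: split_indicator)
    then show ?thesis by simp
  next
    case True
    then have k: "k \<in> ball 0 1" "norm k > 0" by auto
    have bl: "((\<lambda>d. bq d k) \<longlongrightarrow> \<bar>v \<bullet> k\<bar> / norm k powr s) (at_right 0)"
    proof (rule Lim_transform_eventually)
      show "((\<lambda>d. \<bar>(u (x + d *\<^sub>R k) - u x) / d\<bar> / norm k powr s) \<longlongrightarrow> \<bar>v \<bullet> k\<bar> / norm k powr s) (at_right 0)"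
        using diffquot_lim[OF D, of x k] unfolding Dv by (intro tendsto_intros) (use k in auto)
      show "\<forall>\<^sub>F d in at_right 0. \<bar>(u (x + d *\<^sub>R k) - u x) / d\<bar> / norm k powr s = bq d k"
        using eventually_at_right_less[of "0::real"]
        by eventually_elim (simp add: bq_def abs_divide)
    qed
    have rl: "((\<lambda>d. G (t d * bq d k) / G (t d)) \<longlongrightarrow> (\<bar>v \<bullet> k\<bar> / norm k powr s) powr p) (at_right 0)"
      by (rule hypH_ratio_lim[OF H tf bl])
         (use eventually_at_right_less[of "0::real"] in \<open>auto elim!: eventually_mono intro: bqnn\<close>)
    have "((\<lambda>d. G (t d * bq d k) / G (t d) / norm k ^ DIM('a)) \<longlongrightarrow> (\<bar>v \<bullet> k\<bar> / norm k powr s) powr p / norm k ^ DIM('a)) (at_right 0)"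
      using k by (intro tendsto_divide rl tendsto_const) auto
    then show ?thesis unfolding S_def f_def using k by simp
  qed
  have bound: "\<bar>S d k\<bar> \<le> w k" if d: "0 < d" "d \<le> 1" for d k
  proof (cases "k \<in> ball 0 1 - {0}")
    case False
    then have "S d k = 0" "w k = 0 \<or> (k \<in> ball 0 1 - {0})" unfolding S_def w_def by (auto split: split_indicator)
    moreover have "w k \<ge> 0" unfolding w_def using L C by (auto split: split_indicator)
    ultimately show ?thesis using False by simp
  next
    case True
    then have k: "norm k < 1" "norm k > 0" by auto
    have y: "x + d *\<^sub>R k \<in> cball x 1"
      using d k by (simp add: dist_norm mult_le_one)
    have "\<bar>u (x + d *\<^sub>R k) - u x\<bar> \<le> L * (d * norm k)"
      using L(2)[rule_format, OF y] d by simp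
    then have "bq d k \<le> L * (d * norm k) / (d * norm k powr s)"
      unfolding bq_def abs_of_pos[OF d(1)] by (rule divide_right_mono) (use d k in auto)
    also have "\<dots> = L * norm k powr (1 - s)"
      using d k by (simp add: powr_diff field_simps)
    finally have bq1: "bq d k \<le> L * norm k powr (1 - s)" .
    have kp: "norm k powr (1 - s) \<le> 1" using k assms(2) by (intro powr_le1) auto
    have bqL: "bq d k \<le> L" using bq1 kp L(1) by (meson mult_left_le order_trans)
    have td: "t d > 0" unfolding t_def using d by simp
    have r1: "G (t d * bq d k) / G (t d) \<le> C * bq d k"
      using C(2) td bqnn[of d k] bqL by blast
    also have "\<dots> \<le> C * (L * norm k powr (1 - s))" using bq1 C(1) by (intro mult_left_mono) auto
    finally have r2: "G (t d * bq d k) / G (t d) \<le> C * L * norm k powr (1 - s)" by simp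
    have r0: "G (t d * bq d k) / G (t d) \<ge> 0"
      using Gnn[of "t d * bq d k"] Gpos[OF td] td bqnn[of d k] by auto
    have "\<bar>S d k\<bar> = G (t d * bq d k) / G (t d) / norm k ^ DIM('a)"
      unfolding S_def using True Gnn[of "t d * bq d k"] Gpos[OF td] td bqnn[of d k] by (simp add: abs_mult)
    also have "\<dots> \<le> C * L * norm k powr (1 - s) / norm k ^ DIM('a)"
      using r2 k by (intro divide_right_mono) auto
    also have "\<dots> = w k" unfolding w_def using True by simp
    finally show ?thesis .
  qed
  have lim: "((\<lambda>d. \<integral>k. S d k \<partial>lborel) \<longlongrightarrow> (\<integral>k. f k \<partial>lborel)) (at_right 0)"
    unfolding at_right_to_top filterlim_filtermap
  proof (rule integral_dominated_convergence_at_top[where w=w])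
    show "f \<in> borel_measurable lborel" by (rule fm)
    show "(\<lambda>k. S (inverse T) k) \<in> borel_measurable lborel" for T using Sm[of "inverse T"] by simp
    show "integrable lborel w" by (rule wint)
    show "AE k in lborel. ((\<lambda>T. S (inverse T) k) \<longlongrightarrow> f k) at_top"
      by (intro AE_I2 filterlim_compose[OF ptlim filterlim_inverse_at_right_top])
    show "\<forall>\<^sub>F T in at_top. AE k in lborel. norm (S (inverse T) k) \<le> w k"
      unfolding eventually_at_top_linorder
      by (intro exI[of _ 1] allI impI AE_I2) (auto intro!: bound simp: inverse_le_1_iff)
  qed
  have lim2: "((\<lambda>d. p * (1 - s) * (\<integral>k. S d k \<partial>lborel)) \<longlongrightarrow> p * (1 - s) * (\<integral>k. f k \<partial>lborel)) (at_right 0)"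
    by (intro tendsto_mult_left lim)
  have val: "p * (1 - s) * (\<integral>k. f k \<partial>lborel) = K_const TYPE('a) p * norm v powr p"
    unfolding f_def by (rule value_int) (use p1 assms(1,2) in auto)
  have "((\<lambda>d. p * (1 - s) / G (d powr (1 - s)) * (LINT y : ball x d | lborel. F y))
        \<longlongrightarrow> K_const TYPE('a) p * norm v powr p) (at_right 0)"
  proof (rule Lim_transform_eventually[OF lim2[unfolded val]])
    show "\<forall>\<^sub>F d in at_right 0. p * (1 - s) * (\<integral>k. S d k \<partial>lborel) = p * (1 - s) / G (d powr (1 - s)) * (LINT y : ball x d | lborel. F y)"
      using eventually_at_right_less[of "0::real"] by eventually_elim (rule eq1[symmetric])
  qed
  then show ?thesis unfolding F_def v_def .
qed

end
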